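(* Let $b$ be a positive integer and let $g:\mathbb{R}\to\mathbb{R}$ be a periodic field with period $1$, with $|g(x)|\le 1$ for all $x$, and bandlimited in the sense that $$g(x)=\sum_{k=-b}^{b} a[k]\, e^{j2\pi k x},\qquad a[k]=\int_0^1 g(x)e^{-j2\pi kx}\,dx .$$ Let $n>0$ and let $\lambda>1$ be a finite constant independent of $n$. Let $X_1,X_2,\dots$ be i.i.d. positive random variables (inter-sample spacings of a renewal process) with common distribution $X$ satisfying $\mathbb{E}(X)=1/n$ and whose distribution has support in $(0,\lambda/n]$. Let $S_i=X_1+\cdots+X_i$ and let $M$ be the random number of samples in $[0,1]$, i.e. $S_M\le 1<S_{M+1}$. Let $W(x)$ be a measurement-noise process, independent of $(X_i)_{i}$, such that for any distinct points $x_1,\dots,x_l$ the values $W(x_1),\dots,W(x_l)$ are i.i.d. with zero mean and finite variance $\sigma^2$. For $-b\le k\le b$ define $$\widehat{A}_{\mathrm{gen}}[k]:=\frac{1}{M}\sum_{i=1}^{M}\{g(S_i)+W(S_i)\}\exp\!\left(-\frac{j2\pi k i}{M}\right).$$ Then for each $-b\le k\le b$, $$\mathbb{E}\left[\left|\widehat{A}_{\mathrm{gen}}[k]-a[k]\right|^2\right]\le \frac{C}{n},$$ where $C$ is a constant independent of $n$ that depends on the renewal-process parameter $\lambda$ and the bandwidth parameter $b$. Consequently, with $\widehat{G}(x)=\sum_{k=-b}^{b}\widehat{A}_{\mathrm{gen}}[k]e^{j2\pi kx}$, the distortion $$D_{\mathrm{gen}}:=\mathbb{E}\left[\int_0^1|\widehat{G}(x)-g(x)|^2\,dx\right]=\sum_{k=-b}^{b}\mathbb{E}\left[|\widehat{A}_{\mathrm{gen}}[k]-a[k]|^2\right]$$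 satisfies $D_{\mathrm{gen}}\le (2b+1)C/n$, i.e. $D_{\mathrm{gen}}=O(1/n)$.
   Context: $j=\sqrt{-1}$. The sampling locations $S_1,\dots,S_M$ and the distribution of $X$ are unknown to the estimator; only the noisy readings $g(S_1)+W(S_1),\dots,g(S_M)+W(S_M)$ are used. The noise distribution is otherwise unknown. $M$ is a well-defined random variable (stopping rule $X_1+\cdots+X_M\le 1$ and $X_1+\cdots+X_{M+1}>1$). *)

theory Defs
  imports "HOL-Probability.Probability"
begin

text \<open>Renewal sampling: X 0, X 1, ... are the spacings X_1, X_2, ... of the paper
  (0-based), so renS X i = X_1 + ... + X_i = S_i and renS X 0 = 0.\<close>
definition renS :: "(nat \<Rightarrow> 'a \<Rightarrow> real) \<Rightarrow> nat \<Rightarrow> 'a \<Rightarrow> real" where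
  "renS X i \<omega> = (\<Sum>m<i. X m \<omega>)"

definition renM :: "(nat \<Rightarrow> 'a \<Rightarrow> real) \<Rightarrow> 'a \<Rightarrow> nat" where
  "renM X \<omega> = (LEAST m. renS X (Suc m) \<omega> > 1)"

definition fcoef :: "(real \<Rightarrow> real) \<Rightarrow> int \<Rightarrow> complex" where
  "fcoef g k = (LBINT x:{0..1}. complex_of_real (g x) * exp (- (\<i> * of_real (2 * pi * of_int k * x))))"

text \<open>Estimator; Z i is the measurement noise W(S_i) at the i-th sample point.\<close>
definition Ahat :: "(real \<Rightarrow> real) \<Rightarrow> (nat \<Rightarrow> 'a \<Rightarrow> real) \<Rightarrow> (nat \<Rightarrow> 'a \<Rightarrow> real) \<Rightarrow> int \<Rightarrow> 'a \<Rightarrow> complex" where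
  "Ahat g X Z k \<omega> =
     (let m = renM X \<omega> in
       (1 / of_nat m) * (\<Sum>i=1..m. complex_of_real (g (renS X i \<omega>) + Z i \<omega>)
                          * exp (- (\<i> * of_real (2 * pi * of_int k * of_nat i / of_nat m)))))"

definition Ghat :: "nat \<Rightarrow> (real \<Rightarrow> real) \<Rightarrow> (nat \<Rightarrow> 'a \<Rightarrow> real) \<Rightarrow> (nat \<Rightarrow> 'a \<Rightarrow> real) \<Rightarrow> real \<Rightarrow> 'a \<Rightarrow> complex" where
  "Ghat b g X Z x \<omega> = (\<Sum>k=- int b..int b. Ahat g X Z k \<omega> * exp (\<i> * of_real (2 * pi * of_int k * x)))"

end

theory Submission
  imports Defs
begin


lemma exp_i_diff: "cmod (exp (\<i> * of_real s) - exp (\<i> * of_real t)) \<le> \<bar>s - t\<bar>"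
proof -
  have e: "exp (\<i> * of_real x) = Complex (cos x) (sin x)" for x
    by (simp add: exp_eq_polar cis.ctr)
  have "(cmod (exp (\<i> * of_real s) - exp (\<i> * of_real t)))\<^sup>2 = (cos s - cos t)\<^sup>2 + (sin s - sin t)\<^sup>2"
    by (simp add: e cmod_def)
  also have "\<dots> = 2 - 2 * cos (s - t)"
    by (simp add: cos_diff power2_eq_square algebra_simps)
  also have "cos (s - t) = 1 - 2 * (sin ((s - t)/2))\<^sup>2"
  proof -
    have "2 * ((s-t)/2) = s - t" by simp
    thus ?thesis using cos_double_sin[of "(s-t)/2"] by metis
  qed
  also have "2 - 2 * (1 - 2 * (sin ((s - t)/2))\<^sup>2) = 4 * (sin ((s - t)/2))\<^sup>2" by simp
  also have "\<dots> \<le> 4 * ((s-t)/2)\<^sup>2"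
    using abs_sin_x_le_abs_x[of "(s-t)/2"]
    by (intro mult_left_mono) (auto simp: abs_le_square_iff[symmetric] power2_abs)
  also have "\<dots> = \<bar>s - t\<bar>\<^sup>2" by (simp add: power2_eq_square)
  finally show ?thesis by (simp add: abs_le_square_iff[symmetric])
qed

lemma fcoef_bound:
  assumes "\<And>x. \<bar>g x\<bar> \<le> 1"
  shows "cmod (fcoef g k) \<le> 1"
proof -
  let ?f = "\<lambda>x. indicator {0..1::real} x *\<^sub>R (complex_of_real (g x) * exp (- (\<i> * of_real (2 * pi * of_int k * x))))"
  have "fcoef g k = integral\<^sup>L lborel ?f" by (simp add: fcoef_def set_lebesgue_integral_def)
  hence "cmod (fcoef g k) \<le> integral\<^sup>L lborel (\<lambda>x. norm (?f x))"
    using integral_norm_bound by metis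
  also have "\<dots> \<le> 1"
  proof (cases "integrable lborel (\<lambda>x. norm (?f x))")
    case True
    have "integral\<^sup>L lborel (\<lambda>x. norm (?f x)) \<le> integral\<^sup>L lborel (indicator {0..1::real})"
    proof (rule integral_mono[OF True])
      show "integrable lborel (indicator {0..1::real} :: real \<Rightarrow> real)" by simp
      fix x :: real
      have "cmod (exp (- (\<i> * of_real (2 * pi * of_int k * x)))) = 1"
        using norm_exp_i_times[of "- (2 * pi * of_int k * x)"] by simp
      then show "norm (?f x) \<le> indicator {0..1} x"
        using assms[of x] by (auto simp: indicator_def norm_mult)
    qed
    thus ?thesis by simp
  next
    case False thus ?thesis by (simp add: not_integrable_integral_eq)
  qed
  finally show ?thesis .
qed

lemma g_lip:
  fixes g :: "real \<Rightarrow> real" and b :: nat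
  assumes gb: "\<And>x. \<bar>g x\<bar> \<le> 1"
  and ge: "\<And>x. complex_of_real (g x) = (\<Sum>k=- int b..int b. fcoef g k * exp (\<i> * of_real (2 * pi * of_int k * x)))"
  shows "\<bar>g x - g y\<bar> \<le> 2 * pi * real b * (2 * real b + 1) * \<bar>x - y\<bar>"
proof -
  have "complex_of_real (g x - g y) = (\<Sum>k=- int b..int b. fcoef g k *
      (exp (\<i> * of_real (2 * pi * of_int k * x)) - exp (\<i> * of_real (2 * pi * of_int k * y))))"
    by (simp add: ge[of x] ge[of y] sum_subtractf[symmetric] algebra_simps)
  hence "\<bar>g x - g y\<bar> = cmod (\<Sum>k=- int b..int b. fcoef g k *
      (exp (\<i> * of_real (2 * pi * of_int k * x)) - exp (\<i> * of_real (2 * pi * of_int k * y))))"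
    by (metis norm_of_real)
  also have "\<dots> \<le> (\<Sum>k=- int b..int b. cmod (fcoef g k *
      (exp (\<i> * of_real (2 * pi * of_int k * x)) - exp (\<i> * of_real (2 * pi * of_int k * y)))))"
    by (rule norm_sum)
  also have "\<dots> \<le> (\<Sum>k=- int b..int b. 2 * pi * real b * \<bar>x - y\<bar>)"
  proof (rule sum_mono)
    fix k assume k: "k \<in> {- int b..int b}"
    have "cmod (fcoef g k * (exp (\<i> * of_real (2 * pi * of_int k * x)) - exp (\<i> * of_real (2 * pi * of_int k * y))))
       \<le> 1 * \<bar>2 * pi * of_int k * x - 2 * pi * of_int k * y\<bar>"
      unfolding norm_mult by (intro mult_mono fcoef_bound gb exp_i_diff) auto
    also have "\<bar>2 * pi * of_int k * x - 2 * pi * of_int k * y\<bar> = 2 * pi * \<bar>of_int k\<bar> * \<bar>x - y\<bar>"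
      by (simp add: abs_mult right_diff_distrib[symmetric] mult.assoc)
    also have "\<dots> \<le> 2 * pi * real b * \<bar>x - y\<bar>"
      using k by (intro mult_right_mono mult_left_mono) auto
    finally show "cmod (fcoef g k * (exp (\<i> * of_real (2 * pi * of_int k * x)) - exp (\<i> * of_real (2 * pi * of_int k * y))))
       \<le> 2 * pi * real b * \<bar>x - y\<bar>" by simp
  qed
  also have "\<dots> = 2 * pi * real b * (2 * real b + 1) * \<bar>x - y\<bar>" by simp
  finally show ?thesis .
qed

lemma ortho:
  assumes m: "m > 0" and d: "\<bar>d\<bar> < int m"
  shows "(\<Sum>i=1..m. exp (\<i> * of_real (2 * pi * of_int d * of_nat i / of_nat m))) = (if d = 0 then of_nat m else 0)"
proof (cases "d = 0")
  case True thus ?thesis by simp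
next
  case False
  define w where "w = exp (\<i> * of_real (2 * pi * of_int d / of_nat m))"
  have pw: "exp (\<i> * of_real (2 * pi * of_int d * of_nat i / of_nat m)) = w ^ i" for i :: nat
    unfolding w_def exp_of_nat_mult[symmetric] by (simp add: algebra_simps)
  have wm: "w ^ m = 1"
  proof -
    have "w ^ m = exp (\<i> * of_real (2 * pi * of_int d))"
      using pw[of m] m by simp
    also have "\<dots> = 1" by (subst exp_eq_1) auto
    finally show ?thesis .
  qed
  have w1: "w \<noteq> 1"
  proof
    assume "w = 1"
    then obtain j :: int where "2 * pi * of_int d / of_nat m = of_int (2 * j) * pi"
      unfolding w_def by (subst (asm) exp_eq_1) auto
    hence "of_int d = real m * of_int j" using m by (simp add: field_simps)
    hence "d = int m * j" by (metis of_int_eq_iff of_int_mult of_int_of_nat_eq)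
    thus False using d False
      by (metis abs_mult abs_of_nat less_le mult.right_neutral mult_cancel_left mult_le_cancel_left1 mult_zero_right
          of_nat_0_less_iff zero_less_abs_iff int_one_le_iff_zero_less abs_ge_zero linorder_not_le m)
  qed
  have "(1 - w) * (\<Sum>i=1..m. w ^ i) = w ^ 1 - w ^ Suc m" using m by (intro sum_gp_multiplied) auto
  also have "\<dots> = 0" using wm by simp
  finally have "(\<Sum>i=1..m. w ^ i) = 0" using w1 by simp
  thus ?thesis using False pw by simp
qed



lemma int_exp:
  fixes j :: int
  shows "(LBINT x:{0..1::real}. exp (\<i> * of_real (2 * pi * of_int j * x))) = (if j = 0 then 1 else 0)"
proof (cases "j = 0")
  case True thus ?thesis by (simp add: set_lebesgue_integral_def)
next
  case False
  define c where "c = \<i> * of_real (2 * pi * of_int j)"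
  have c0: "c \<noteq> 0" using False by (simp add: c_def)
  have e: "exp (\<i> * of_real (2 * pi * of_int j * x)) = exp (c * of_real x)" for x
    by (simp add: c_def mult.assoc)
  have si: "set_integrable lborel {0..1::real} (\<lambda>x. exp (\<i> * of_real (2 * pi * of_int j * x)))"
    by (intro borel_integrable_atLeastAtMost' continuous_intros)
  have "((\<lambda>x. exp (c * of_real x)) has_integral ((\<lambda>x. exp (c * of_real x) / c) 1 - (\<lambda>x. exp (c * of_real x) / c) 0)) {0..1}"
  proof (rule fundamental_theorem_of_calculus)
    fix x :: real
    have "((\<lambda>z. exp (c * z) / c) has_field_derivative exp (c * of_real x)) (at (of_real x))"
      using c0 by (auto intro!: derivative_eq_intros)
    thus "((\<lambda>x. exp (c * of_real x) / c) has_vector_derivative exp (c * of_real x)) (at x within {0..1})"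
      by (rule has_vector_derivative_real_field)
  qed simp
  moreover have "exp c = 1" unfolding c_def by (subst exp_eq_1) auto
  ultimately have "((\<lambda>x. exp (c * of_real x)) has_integral 0) {0..1}" by simp
  hence "integral {0..1} (\<lambda>x. exp (\<i> * of_real (2 * pi * of_int j * x))) = 0"
    unfolding e by (simp add: integral_unique)
  thus ?thesis using set_borel_integral_eq_integral(2)[OF si] False by simp
qed

lemma parseval:
  fixes d :: "int \<Rightarrow> complex" and b :: nat
  shows "(LBINT x:{0..1::real}. (cmod (\<Sum>k=- int b..int b. d k * exp (\<i> * of_real (2 * pi * of_int k * x))))\<^sup>2)
       = (\<Sum>k=- int b..int b. (cmod (d k))\<^sup>2)"
proof -
  let ?K = "{- int b..int b}"
  define e where "e = (\<lambda>(k::int) (x::real). exp (\<i> * of_real (2 * pi * of_int k * x)))"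
  have ee: "e k x * cnj (e l x) = e (k - l) x" for k l x
  proof -
    have c: "cnj (exp (\<i> * complex_of_real t)) = exp (- (\<i> * complex_of_real t))" for t
      by (simp add: exp_cnj)
    show ?thesis unfolding e_def c by (simp add: exp_add[symmetric] algebra_simps)
  qed
  have sq: "complex_of_real ((cmod (\<Sum>k\<in>?K. d k * e k x))\<^sup>2) = (\<Sum>k\<in>?K. \<Sum>l\<in>?K. d k * cnj (d l) * e (k - l) x)" for x
    unfolding complex_norm_square cnj_sum sum_distrib_right sum_distrib_left
    by (subst sum.swap) (intro sum.cong refl, simp add: ee[symmetric] algebra_simps)
  have si: "set_integrable lborel {0..1::real} (e j)" for j
    unfolding e_def by (intro borel_integrable_atLeastAtMost' continuous_intros)
  have "complex_of_real (LBINT x:{0..1::real}. (cmod (\<Sum>k\<in>?K. d k * e k x))\<^sup>2)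
     = (LBINT x:{0..1::real}. complex_of_real ((cmod (\<Sum>k\<in>?K. d k * e k x))\<^sup>2))"
    by (rule set_integral_complex_of_real[symmetric])
  also have "\<dots> = (LBINT x:{0..1::real}. (\<Sum>k\<in>?K. \<Sum>l\<in>?K. d k * cnj (d l) * e (k - l) x))"
    by (simp only: sq)
  also have "\<dots> = (\<Sum>k\<in>?K. \<Sum>l\<in>?K. d k * cnj (d l) * (LBINT x:{0..1::real}. e (k - l) x))"
  proof -
    have eq: "(\<lambda>x. indicator {0..1::real} x *\<^sub>R (\<Sum>k\<in>?K. \<Sum>l\<in>?K. d k * cnj (d l) * e (k - l) x))
       = (\<lambda>x. \<Sum>k\<in>?K. \<Sum>l\<in>?K. d k * cnj (d l) * (indicator {0..1::real} x *\<^sub>R e (k - l) x))"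
      by (simp add: fun_eq_iff scaleR_conv_of_real sum_distrib_left algebra_simps)
    have si': "integrable lborel (\<lambda>x. indicator {0..1::real} x *\<^sub>R e j x)" for j
      using si[of j] unfolding set_integrable_def .
    have i1: "integrable lborel (\<lambda>x. \<Sum>l\<in>?K. d k * cnj (d l) * (indicator {0..1::real} x *\<^sub>R e (k - l) x))" for k
      by (intro Bochner_Integration.integrable_sum Bochner_Integration.integrable_mult_right si')
    have "integral\<^sup>L lborel (\<lambda>x. \<Sum>k\<in>?K. \<Sum>l\<in>?K. d k * cnj (d l) * (indicator {0..1::real} x *\<^sub>R e (k - l) x))
       = (\<Sum>k\<in>?K. integral\<^sup>L lborel (\<lambda>x. \<Sum>l\<in>?K. d k * cnj (d l) * (indicator {0..1::real} x *\<^sub>R e (k - l) x)))"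
      by (rule Bochner_Integration.integral_sum) (rule i1)
    also have "\<dots> = (\<Sum>k\<in>?K. \<Sum>l\<in>?K. integral\<^sup>L lborel (\<lambda>x. d k * cnj (d l) * (indicator {0..1::real} x *\<^sub>R e (k - l) x)))"
      by (intro sum.cong refl Bochner_Integration.integral_sum Bochner_Integration.integrable_mult_right si')
    also have "\<dots> = (\<Sum>k\<in>?K. \<Sum>l\<in>?K. d k * cnj (d l) * integral\<^sup>L lborel (\<lambda>x. indicator {0..1::real} x *\<^sub>R e (k - l) x))"
      by (intro sum.cong refl integral_mult_right_zero)
    finally show ?thesis unfolding set_lebesgue_integral_def eq .
  qed
  also have "\<dots> = (\<Sum>k\<in>?K. \<Sum>l\<in>?K. if l = k then d k * cnj (d l) else 0)"
    by (intro sum.cong refl) (simp only: e_def int_exp, simp)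
  also have "\<dots> = (\<Sum>k\<in>?K. d k * cnj (d k))" by simp
  also have "\<dots> = complex_of_real (\<Sum>k\<in>?K. (cmod (d k))\<^sup>2)"
    unfolding of_real_sum by (simp only: complex_norm_square)
  finally show ?thesis unfolding e_def using of_real_eq_iff by blast
qed

lemma dft:
  fixes g :: "real \<Rightarrow> real" and b m :: nat and k :: int
  assumes ge: "\<And>x. complex_of_real (g x) = (\<Sum>k=- int b..int b. fcoef g k * exp (\<i> * of_real (2 * pi * of_int k * x)))"
  and m: "m > 2 * b" and k: "k \<in> {- int b..int b}"
  shows "(\<Sum>i=1..m. complex_of_real (g (real i / real m)) * exp (- (\<i> * of_real (2 * pi * of_int k * of_nat i / of_nat m))))
     = of_nat m * fcoef g k"
proof -
  let ?K = "{- int b..int b}"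
  have "(\<Sum>i=1..m. complex_of_real (g (real i / real m)) * exp (- (\<i> * of_real (2 * pi * of_int k * of_nat i / of_nat m))))
     = (\<Sum>i=1..m. \<Sum>l\<in>?K. fcoef g l * exp (\<i> * of_real (2 * pi * of_int (l - k) * of_nat i / of_nat m)))"
  proof (intro sum.cong refl)
    fix i
    have "exp (\<i> * of_real (2 * pi * of_int l * (real i / real m))) * exp (- (\<i> * of_real (2 * pi * of_int k * of_nat i / of_nat m)))
        = exp (\<i> * of_real (2 * pi * of_int (l - k) * of_nat i / of_nat m))" for l
      by (simp add: exp_add[symmetric] exp_minus[symmetric] algebra_simps diff_divide_distrib)
    thus "complex_of_real (g (real i / real m)) * exp (- (\<i> * of_real (2 * pi * of_int k * of_nat i / of_nat m)))
       = (\<Sum>l\<in>?K. fcoef g l * exp (\<i> * of_real (2 * pi * of_int (l - k) * of_nat i / of_nat m)))"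
      unfolding ge sum_distrib_right by (simp add: mult.assoc)
  qed
  also have "\<dots> = (\<Sum>l\<in>?K. fcoef g l * (\<Sum>i=1..m. exp (\<i> * of_real (2 * pi * of_int (l - k) * of_nat i / of_nat m))))"
    by (subst sum.swap) (simp add: sum_distrib_left)
  also have "\<dots> = (\<Sum>l\<in>?K. fcoef g l * (if l - k = 0 then of_nat m else 0))"
  proof (intro sum.cong refl)
    fix l assume "l \<in> ?K"
    hence "\<bar>l - k\<bar> < int m" using k m by auto
    thus "fcoef g l * (\<Sum>i=1..m. exp (\<i> * of_real (2 * pi * of_int (l - k) * of_nat i / of_nat m)))
        = fcoef g l * (if l - k = 0 then of_nat m else 0)"
      using m by (subst ortho) auto
  qed
  also have "\<dots> = of_nat m * fcoef g k" using k by (simp add: if_distrib cong: if_cong)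
  finally show ?thesis .
qed




lemma renS_0[simp]: "renS X 0 \<omega> = 0" by (simp add: renS_def)
lemma renS_Suc: "renS X (Suc i) \<omega> = renS X i \<omega> + X i \<omega>" by (simp add: renS_def)

lemma renS_mono:
  assumes "\<forall>m. 0 \<le> X m \<omega>" "i \<le> j"
  shows "renS X i \<omega> \<le> renS X j \<omega>"
  unfolding renS_def using assms by (intro sum_mono2) auto

lemma renS_le:
  assumes "\<forall>m. X m \<omega> \<le> c"
  shows "renS X i \<omega> \<le> real i * c"
  unfolding renS_def using assms sum_mono[of "{..<i}" "\<lambda>m. X m \<omega>" "\<lambda>_. c"] by simp

lemma renM_cross:
  assumes nn: "\<forall>m. 0 \<le> X m \<omega>" and ex: "\<exists>m. 1 < renS X m \<omega>"
  shows "renS X (renM X \<omega>) \<omega> \<le> 1 \<and> 1 < renS X (Suc (renM X \<omega>)) \<omega>"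
proof -
  from ex obtain m where m: "1 < renS X m \<omega>" by blast
  then obtain m' where m': "m = Suc m'" by (cases m) auto
  have ex': "\<exists>m. 1 < renS X (Suc m) \<omega>" using m m' by blast
  have 1: "1 < renS X (Suc (renM X \<omega>)) \<omega>"
    unfolding renM_def by (rule LeastI_ex[OF ex'])
  have 2: "renS X (renM X \<omega>) \<omega> \<le> 1"
  proof (cases "renM X \<omega>")
    case 0 thus ?thesis by simp
  next
    case (Suc j)
    hence "j < renM X \<omega>" by simp
    hence "\<not> 1 < renS X (Suc j) \<omega>" unfolding renM_def by (rule not_less_Least)
    thus ?thesis using Suc by simp
  qed
  show ?thesis using 1 2 by simp
qed

lemma renM_eq_iff:
  assumes nn: "\<forall>m. 0 \<le> X m \<omega>" and ex: "\<exists>m. 1 < renS X m \<omega>"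
  shows "renM X \<omega> = m \<longleftrightarrow> (1 < renS X (Suc m) \<omega> \<and> (\<forall>j<m. renS X (Suc j) \<omega> \<le> 1))"
proof
  assume "renM X \<omega> = m"
  thus "1 < renS X (Suc m) \<omega> \<and> (\<forall>j<m. renS X (Suc j) \<omega> \<le> 1)"
    using renM_cross[OF nn ex] renS_mono[where X=X and \<omega>=\<omega>, OF nn] by (meson Suc_leI order_trans)
next
  assume h: "1 < renS X (Suc m) \<omega> \<and> (\<forall>j<m. renS X (Suc j) \<omega> \<le> 1)"
  show "renM X \<omega> = m" unfolding renM_def
    by (rule Least_equality) (use h in \<open>auto simp: not_less[symmetric]\<close>)
qed

locale rs = prob_space P for P :: "'a measure" +
  fixes b :: nat and lam \<sigma>2 n :: real and g :: "real \<Rightarrow> real" and X Z :: "nat \<Rightarrow> 'a \<Rightarrow> real"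
  assumes lam: "lam > 1" and npos: "n > 0" and b1: "b \<ge> 1"
  and gbnd: "\<And>x. \<bar>g x\<bar> \<le> 1"
  and gexp: "\<And>x. complex_of_real (g x) = (\<Sum>k=- int b..int b. fcoef g k * exp (\<i> * of_real (2 * pi * of_int k * x)))"
  and indep: "indep_vars (\<lambda>_. borel) (\<lambda>i. case i of Inl m \<Rightarrow> X m | Inr m \<Rightarrow> Z m) UNIV"
  and distX: "\<And>m. distr P borel (X m) = distr P borel (X 0)"
  and distZ: "\<And>m. distr P borel (Z m) = distr P borel (Z 0)"
  and AEX0: "AE \<omega> in P. 0 < X 0 \<omega> \<and> X 0 \<omega> \<le> lam / n"
  and EX0: "expectation (X 0) = 1 / n"
  and intZ0: "integrable P (\<lambda>\<omega>. (Z 0 \<omega>)\<^sup>2)"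
  and EZ0: "expectation (Z 0) = 0"
  and EZ20: "expectation (\<lambda>\<omega>. (Z 0 \<omega>)\<^sup>2) = \<sigma>2"
begin

abbreviation "Yc \<equiv> (\<lambda>i. case i of Inl m \<Rightarrow> X m | Inr m \<Rightarrow> Z m)"

lemma measX[measurable]: "X m \<in> borel_measurable P"
proof -
  have "random_variable borel (Yc (Inl m))" using indep unfolding indep_vars_def by blast
  thus ?thesis by simp
qed

lemma measZ[measurable]: "Z m \<in> borel_measurable P"
proof -
  have "random_variable borel (Yc (Inr m))" using indep unfolding indep_vars_def by blast
  thus ?thesis by simp
qed

lemma AEXm: "AE \<omega> in P. 0 < X m \<omega> \<and> X m \<omega> \<le> lam / n"
proof -
  have "AE x in distr P borel (X 0). 0 < x \<and> x \<le> lam / n"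
    using AEX0 by (subst AE_distr_iff) auto
  hence "AE x in distr P borel (X m). 0 < x \<and> x \<le> lam / n" by (subst distX)
  thus ?thesis by (subst (asm) AE_distr_iff) auto
qed

lemma AEX: "AE \<omega> in P. \<forall>m. 0 < X m \<omega> \<and> X m \<omega> \<le> lam / n"
  using AEXm by (simp add: AE_all_countable)

lemma intX: "integrable P (X m)"
  apply (rule integrable_const_bound[where B="lam/n"])
   apply (rule eventually_mono[OF AEXm[of m]]) by auto

lemma EXm: "expectation (X m) = 1 / n"
proof -
  have "expectation (X m) = integral\<^sup>L (distr P borel (X m)) (\<lambda>x. x)"
    by (subst integral_distr) auto
  also have "\<dots> = integral\<^sup>L (distr P borel (X 0)) (\<lambda>x. x)" using distX[of m] by simp
  also have "\<dots> = 1/n" using EX0 by (subst integral_distr) auto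
  finally show ?thesis .
qed

lemma intZ2: "integrable P (\<lambda>\<omega>. (Z m \<omega>)\<^sup>2)"
proof -
  have "integrable (distr P borel (Z 0)) (\<lambda>x. x\<^sup>2)" using intZ0 by (subst integrable_distr_eq) auto
  hence "integrable (distr P borel (Z m)) (\<lambda>x. x\<^sup>2)" using distZ[of m] by simp
  thus ?thesis by (subst (asm) integrable_distr_eq) auto
qed

lemma intZ: "integrable P (Z m)"
  by (rule square_integrable_imp_integrable[OF _ intZ2]) auto

lemma EZm: "expectation (Z m) = 0"
proof -
  have "expectation (Z m) = integral\<^sup>L (distr P borel (Z m)) (\<lambda>x. x)"
    by (subst integral_distr) auto
  also have "\<dots> = integral\<^sup>L (distr P borel (Z 0)) (\<lambda>x. x)" using distZ[of m] by simp
  also have "\<dots> = 0" using EZ0 by (subst integral_distr) auto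
  finally show ?thesis .
qed

lemma EZ2m: "expectation (\<lambda>\<omega>. (Z m \<omega>)\<^sup>2) = \<sigma>2"
proof -
  have "expectation (\<lambda>\<omega>. (Z m \<omega>)\<^sup>2) = integral\<^sup>L (distr P borel (Z m)) (\<lambda>x. x\<^sup>2)"
    by (subst integral_distr) auto
  also have "\<dots> = integral\<^sup>L (distr P borel (Z 0)) (\<lambda>x. x\<^sup>2)" using distZ[of m] by simp
  also have "\<dots> = \<sigma>2" using EZ20 by (subst integral_distr) auto
  finally show ?thesis .
qed

lemma indep_pair:
  assumes "i \<noteq> j"
  shows "indep_var borel (Yc i) borel (Yc j)"
proof -
  have "indep_var (PiM {i} (\<lambda>_. borel)) (\<lambda>\<omega>. restrict (\<lambda>i. Yc i \<omega>) {i})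
                  (PiM {j} (\<lambda>_. borel)) (\<lambda>\<omega>. restrict (\<lambda>i. Yc i \<omega>) {j})"
    using assms by (intro indep_var_restrict[OF indep]) auto
  hence "indep_var borel ((\<lambda>f. f i) \<circ> (\<lambda>\<omega>. restrict (\<lambda>i. Yc i \<omega>) {i}))
                   borel ((\<lambda>f. f j) \<circ> (\<lambda>\<omega>. restrict (\<lambda>i. Yc i \<omega>) {j}))"
    by (rule indep_var_compose) auto
  thus ?thesis by (simp add: comp_def)
qed

lemma hoeff_le:
  assumes m: "m \<ge> 1" and e: "\<epsilon> \<ge> 0"
  shows "prob {\<omega>\<in>space P. renS X m \<omega> \<le> real m / n - \<epsilon>} \<le> exp (- 2 * \<epsilon>\<^sup>2 / (real m * (lam / n)\<^sup>2))"
proof -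
  let ?I = "Inl ` {..<m} :: (nat + nat) set"
  interpret H: Hoeffding_ineq P ?I Yc "\<lambda>_. 0" "\<lambda>_. lam / n" "\<Sum>i\<in>?I. expectation (Yc i)"
  proof unfold_locales
    show "finite ?I" by simp
    show "indep_vars (\<lambda>_. borel) Yc ?I" by (rule indep_vars_subset[OF indep]) auto
    fix i assume "i \<in> ?I"
    then obtain l where "i = Inl l" by auto
    thus "AE x in P. Yc i x \<in> {0..lam / n}" using AEXm[of l] by (auto elim!: eventually_mono)
  qed simp
  have mu: "(\<Sum>i\<in>?I. expectation (Yc i)) = real m / n"
    by (subst sum.reindex) (auto simp: EXm)
  have S: "(\<Sum>i\<in>?I. Yc i x) = renS X m x" for x
    by (subst sum.reindex) (auto simp: renS_def)
  have d: "(\<Sum>i\<in>?I. (lam / n - 0)\<^sup>2) = real m * (lam / n)\<^sup>2"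
    by (subst sum.reindex) auto
  have "0 < real m * (lam / n)\<^sup>2" using m lam npos by simp
  from H.Hoeffding_ineq_le[OF e, unfolded d mu S, OF this] show ?thesis .
qed

lemma hoeff_ge:
  assumes m: "m \<ge> 1" and e: "\<epsilon> \<ge> 0"
  shows "prob {\<omega>\<in>space P. renS X m \<omega> \<ge> real m / n + \<epsilon>} \<le> exp (- 2 * \<epsilon>\<^sup>2 / (real m * (lam / n)\<^sup>2))"
proof -
  let ?I = "Inl ` {..<m} :: (nat + nat) set"
  interpret H: Hoeffding_ineq P ?I Yc "\<lambda>_. 0" "\<lambda>_. lam / n" "\<Sum>i\<in>?I. expectation (Yc i)"
  proof unfold_locales
    show "finite ?I" by simp
    show "indep_vars (\<lambda>_. borel) Yc ?I" by (rule indep_vars_subset[OF indep]) auto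
    fix i assume "i \<in> ?I"
    then obtain l where "i = Inl l" by auto
    thus "AE x in P. Yc i x \<in> {0..lam / n}" using AEXm[of l] by (auto elim!: eventually_mono)
  qed simp
  have mu: "(\<Sum>i\<in>?I. expectation (Yc i)) = real m / n"
    by (subst sum.reindex) (auto simp: EXm)
  have S: "(\<Sum>i\<in>?I. Yc i x) = renS X m x" for x
    by (subst sum.reindex) (auto simp: renS_def)
  have d: "(\<Sum>i\<in>?I. (lam / n - 0)\<^sup>2) = real m * (lam / n)\<^sup>2"
    by (subst sum.reindex) auto
  have "0 < real m * (lam / n)\<^sup>2" using m lam npos by simp
  from H.Hoeffding_ineq_ge[OF e, unfolded d mu S, OF this] show ?thesis .
qed

lemma measS[measurable]: "(\<lambda>\<omega>. renS X m \<omega>) \<in> borel_measurable P"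
  unfolding renS_def by measurable

end


lemma exp_small_bound:
  fixes p lam :: real and N :: nat
  assumes lam: "lam > 0" and h: "\<And>m::nat. m \<ge> N \<Longrightarrow> p \<le> exp (- real m / lam)"
  shows "p \<le> 0"
proof (rule ccontr)
  assume "\<not> p \<le> 0" hence p: "p > 0" by simp
  obtain m :: nat where m: "m > max (real N) (- lam * ln p)" using reals_Archimedean2 by blast
  hence "- real m / lam < ln p" using lam by (simp add: field_simps)
  hence "exp (- real m / lam) < p" using p by (metis exp_less_cancel_iff exp_ln)
  moreover have "m \<ge> N" using m by simp
  ultimately show False using h by force
qed

context rs begin

lemma AE_cross: "AE \<omega> in P. \<exists>m. 1 < renS X m \<omega>"
proof (rule AE_I[where N="{\<omega>\<in>space P. \<forall>m. renS X m \<omega> \<le> 1}"])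
  show "{\<omega> \<in> space P. \<not> (\<exists>m. 1 < renS X m \<omega>)} \<subseteq> {\<omega>\<in>space P. \<forall>m. renS X m \<omega> \<le> 1}" by (auto simp: not_less)
  show "{\<omega>\<in>space P. \<forall>m. renS X m \<omega> \<le> 1} \<in> sets P" by measurable
  let ?A = "{\<omega>\<in>space P. \<forall>m. renS X m \<omega> \<le> 1}"
  have "prob ?A \<le> 0"
  proof (rule exp_small_bound[where lam="2 * lam\<^sup>2" and N="max 1 (nat \<lceil>2 * n\<rceil>)"])
    show "0 < 2 * lam\<^sup>2" using lam by simp
    fix m :: nat assume "max 1 (nat \<lceil>2 * n\<rceil>) \<le> m"
    hence m1: "m \<ge> 1" and m2: "real m \<ge> 2 * n" by (auto simp: nat_le_iff ceiling_le_iff)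
    have "prob ?A \<le> prob {\<omega>\<in>space P. renS X m \<omega> \<le> real m / n - (real m / n - 1)}"
      by (intro finite_measure_mono) auto
    also have "\<dots> \<le> exp (- 2 * (real m / n - 1)\<^sup>2 / (real m * (lam / n)\<^sup>2))"
      using m2 npos by (intro hoeff_le m1) (simp add: field_simps)
    also have "\<dots> \<le> exp (- real m / (2 * lam\<^sup>2))"
    proof -
      have a: "real m / n - 1 \<ge> real m / (2 * n)" using m2 npos by (simp add: field_simps)
      have b: "real m / (2 * n) \<ge> 0" using npos by simp
      have "(real m / (2 * n))\<^sup>2 \<le> (real m / n - 1)\<^sup>2" using a b by (intro power_mono) auto
      hence "2 * (real m / (2 * n))\<^sup>2 / (real m * (lam / n)\<^sup>2) \<le> 2 * (real m / n - 1)\<^sup>2 / (real m * (lam / n)\<^sup>2)"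
        using m1 lam npos by (intro divide_right_mono) auto
      moreover have "2 * (real m / (2 * n))\<^sup>2 / (real m * (lam / n)\<^sup>2) = real m / (2 * lam\<^sup>2)"
        using m1 lam npos by (simp add: field_simps power2_eq_square)
      ultimately show ?thesis by simp
    qed
    finally show "prob ?A \<le> exp (- real m / (2 * lam\<^sup>2))" .
  qed
  thus "emeasure P ?A = 0" by (simp add: emeasure_eq_measure measure_nonneg antisym)
qed

definition good :: "'a \<Rightarrow> bool" where
  "good \<omega> \<longleftrightarrow> (\<forall>m. 0 < X m \<omega> \<and> X m \<omega> \<le> lam / n) \<and> (\<exists>m. 1 < renS X m \<omega>)"

lemma AE_good: "AE \<omega> in P. good \<omega>"
  using AEX AE_cross by (auto simp: good_def)

end


lemma cmod_sum_sq:
  fixes a :: "'i \<Rightarrow> real" and w :: "'i \<Rightarrow> complex"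
  shows "(cmod (\<Sum>i\<in>I. of_real (a i) * w i))\<^sup>2 = (\<Sum>i\<in>I. \<Sum>j\<in>I. a i * a j * Re (w i * cnj (w j)))"
proof -
  have "complex_of_real ((cmod (\<Sum>i\<in>I. of_real (a i) * w i))\<^sup>2)
      = (\<Sum>i\<in>I. \<Sum>j\<in>I. of_real (a i * a j) * (w i * cnj (w j)))"
    unfolding complex_norm_square cnj_sum sum_distrib_right sum_distrib_left
    by (subst sum.swap, intro sum.cong refl, simp add: algebra_simps)
  hence "(cmod (\<Sum>i\<in>I. of_real (a i) * w i))\<^sup>2 = Re (\<Sum>i\<in>I. \<Sum>j\<in>I. of_real (a i * a j) * (w i * cnj (w j)))"
    by (metis Re_complex_of_real)
  also have "\<dots> = (\<Sum>i\<in>I. \<Sum>j\<in>I. a i * a j * Re (w i * cnj (w j)))"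
    by (simp add: Re_sum)
  finally show ?thesis .
qed

context rs begin

lemma EZZ:
  shows "integrable P (\<lambda>\<omega>. Z i \<omega> * Z j \<omega>)"
    and "expectation (\<lambda>\<omega>. Z i \<omega> * Z j \<omega>) = (if i = j then \<sigma>2 else 0)"
proof -
  have "integrable P (\<lambda>\<omega>. Z i \<omega> * Z j \<omega>) \<and> expectation (\<lambda>\<omega>. Z i \<omega> * Z j \<omega>) = (if i = j then \<sigma>2 else 0)"
  proof (cases "i = j")
    case True thus ?thesis using intZ2[of i] EZ2m[of i] by (simp add: power2_eq_square)
  next
    case False
    have ind: "indep_var borel (Yc (Inr i)) borel (Yc (Inr j))" using False by (intro indep_pair) auto
    have "integrable P (\<lambda>\<omega>. Z i \<omega> * Z j \<omega>)"
      using indep_var_integrable[OF ind] intZ by simp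
    moreover have "expectation (\<lambda>\<omega>. Z i \<omega> * Z j \<omega>) = 0"
      using indep_var_lebesgue_integral[OF ind] intZ EZm by simp
    ultimately show ?thesis using False by simp
  qed
  thus "integrable P (\<lambda>\<omega>. Z i \<omega> * Z j \<omega>)" "expectation (\<lambda>\<omega>. Z i \<omega> * Z j \<omega>) = (if i = j then \<sigma>2 else 0)"
    by auto
qed

definition Nm :: "int \<Rightarrow> nat \<Rightarrow> 'a \<Rightarrow> complex" where
  "Nm k m \<omega> = (1 / of_nat m) * (\<Sum>i=1..m. complex_of_real (Z i \<omega>) * exp (- (\<i> * of_real (2 * pi * of_int k * of_nat i / of_nat m))))"

lemma ENm:
  assumes m: "m \<ge> 1"
  shows "integrable P (\<lambda>\<omega>. (cmod (Nm k m \<omega>))\<^sup>2)" and "expectation (\<lambda>\<omega>. (cmod (Nm k m \<omega>))\<^sup>2) = \<sigma>2 / m"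
proof -
  define w where "w i = exp (- (\<i> * of_real (2 * pi * of_int k * of_nat i / of_nat m)))" for i :: nat
  have w1: "Re (w i * cnj (w i)) = 1" for i
  proof -
    have "w i * cnj (w i) = of_real ((cmod (w i))\<^sup>2)" using complex_norm_square[of "w i"] by simp
    moreover have "cmod (w i) = 1" unfolding w_def
      using norm_exp_i_times[of "- (2 * pi * of_int k * of_nat i / of_nat m)"] by simp
    ultimately show ?thesis by simp
  qed
  have eq: "(cmod (Nm k m \<omega>))\<^sup>2 = (1 / real m)\<^sup>2 * (\<Sum>i\<in>{1..m}. \<Sum>j\<in>{1..m}. Re (w i * cnj (w j)) * (Z i \<omega> * Z j \<omega>))" for \<omega>
  proof -
    have "(cmod (Nm k m \<omega>))\<^sup>2 = (1 / real m)\<^sup>2 * (cmod (\<Sum>i\<in>{1..m}. of_real (Z i \<omega>) * w i))\<^sup>2"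
      unfolding Nm_def w_def by (simp add: norm_mult power_mult_distrib norm_divide power_divide)
    thus ?thesis unfolding cmod_sum_sq by (simp add: algebra_simps)
  qed
  show "integrable P (\<lambda>\<omega>. (cmod (Nm k m \<omega>))\<^sup>2)"
    unfolding eq by (intro Bochner_Integration.integrable_mult_right Bochner_Integration.integrable_sum EZZ(1))
  have "expectation (\<lambda>\<omega>. (cmod (Nm k m \<omega>))\<^sup>2)
     = (1 / real m)\<^sup>2 * (\<Sum>i\<in>{1..m}. \<Sum>j\<in>{1..m}. Re (w i * cnj (w j)) * expectation (\<lambda>\<omega>. Z i \<omega> * Z j \<omega>))"
    unfolding eq by (simp add: integral_sum integrable_sum EZZ(1))
  also have "\<dots> = (1 / real m)\<^sup>2 * (\<Sum>i\<in>{1..m}. \<sigma>2)"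
  proof -
    have w1': "Re (w i) * Re (w i) + Im (w i) * Im (w i) = 1" for i using w1[of i] by simp
    show ?thesis by (simp add: EZZ(2) w1' if_distrib cong: if_cong)
  qed
  also have "\<dots> = \<sigma>2 / m" using m by (simp add: power2_eq_square field_simps)
  finally show "expectation (\<lambda>\<omega>. (cmod (Nm k m \<omega>))\<^sup>2) = \<sigma>2 / m" .
qed

end


context rs begin

definition Ev :: "nat \<Rightarrow> 'a set" where
  "Ev m = {\<omega>\<in>space P. 1 < renS X (Suc m) \<omega> \<and> (\<forall>j<m. renS X (Suc j) \<omega> \<le> 1)}"

lemma Ev_sets[measurable]: "Ev m \<in> sets P"
  unfolding Ev_def by measurable

lemma indep_ev_N:
  assumes m: "m \<ge> 1"
  shows "integrable P (\<lambda>\<omega>. indicator (Ev m) \<omega> * (cmod (Nm k m \<omega>))\<^sup>2)"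
    and "expectation (\<lambda>\<omega>. indicator (Ev m) \<omega> * (cmod (Nm k m \<omega>))\<^sup>2) = prob (Ev m) * (\<sigma>2 / m)"
proof -
  let ?A = "Inl ` {..m} :: (nat + nat) set"
  let ?B = "Inr ` {1..m} :: (nat + nat) set"
  define Fa :: "(nat + nat \<Rightarrow> real) \<Rightarrow> real" where
    "Fa f = (if 1 < (\<Sum>l\<in>{..<Suc m}. f (Inl l)) \<and> (\<forall>j\<in>{..<m}. (\<Sum>l\<in>{..<Suc j}. f (Inl l)) \<le> 1) then 1 else 0)" for f
  define Gb :: "(nat + nat \<Rightarrow> real) \<Rightarrow> real" where
    "Gb f = (cmod ((1 / of_nat m) * (\<Sum>i\<in>{1..m}. complex_of_real (f (Inr i)) * exp (- (\<i> * of_real (2 * pi * of_int k * of_nat i / of_nat m))))))\<^sup>2" for f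
  have ind: "indep_var (PiM ?A (\<lambda>_. borel)) (\<lambda>\<omega>. restrict (\<lambda>i. Yc i \<omega>) ?A)
                  (PiM ?B (\<lambda>_. borel)) (\<lambda>\<omega>. restrict (\<lambda>i. Yc i \<omega>) ?B)"
    by (intro indep_var_restrict[OF indep]) auto
  have mFa: "Fa \<in> borel_measurable (PiM ?A (\<lambda>_. borel))"
    unfolding Fa_def by measurable
  have mGb: "Gb \<in> borel_measurable (PiM ?B (\<lambda>_. borel))"
    unfolding Gb_def by measurable
  have ind2: "indep_var borel (Fa \<circ> (\<lambda>\<omega>. restrict (\<lambda>i. Yc i \<omega>) ?A)) borel (Gb \<circ> (\<lambda>\<omega>. restrict (\<lambda>i. Yc i \<omega>) ?B))"
    by (rule indep_var_compose[OF ind mFa mGb])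
  have eqA: "(Fa \<circ> (\<lambda>\<omega>. restrict (\<lambda>i. Yc i \<omega>) ?A)) \<omega> = indicator (Ev m) \<omega>" if "\<omega> \<in> space P" for \<omega>
  proof -
    have "(\<Sum>l\<in>{..<Suc j}. restrict (\<lambda>i. Yc i \<omega>) ?A (Inl l)) = renS X (Suc j) \<omega>" if "j \<le> m" for j
      unfolding renS_def using that by (intro sum.cong refl) auto
    thus ?thesis using that by (auto simp: Fa_def Ev_def indicator_def)
  qed
  have eqB: "(Gb \<circ> (\<lambda>\<omega>. restrict (\<lambda>i. Yc i \<omega>) ?B)) \<omega> = (cmod (Nm k m \<omega>))\<^sup>2" for \<omega>
  proof -
    have "(\<Sum>i\<in>{1..m}. complex_of_real (restrict (\<lambda>i. Yc i \<omega>) ?B (Inr i)) * exp (- (\<i> * of_real (2 * pi * of_int k * of_nat i / of_nat m))))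
        = (\<Sum>i\<in>{1..m}. complex_of_real (Z i \<omega>) * exp (- (\<i> * of_real (2 * pi * of_int k * of_nat i / of_nat m))))"
      by (intro sum.cong refl) auto
    thus ?thesis by (simp add: Gb_def Nm_def)
  qed
  have iA: "integrable P (Fa \<circ> (\<lambda>\<omega>. restrict (\<lambda>i. Yc i \<omega>) ?A))"
    by (subst Bochner_Integration.integrable_cong[OF refl eqA]) (auto intro!: integrable_real_indicator simp: emeasure_eq_measure)
  have iB: "integrable P (Gb \<circ> (\<lambda>\<omega>. restrict (\<lambda>i. Yc i \<omega>) ?B))"
    using ENm(1)[OF m, of k] by (subst Bochner_Integration.integrable_cong[OF refl eqB]) auto
  have prodeq: "(Fa \<circ> (\<lambda>\<omega>. restrict (\<lambda>i. Yc i \<omega>) ?A)) \<omega> * (Gb \<circ> (\<lambda>\<omega>. restrict (\<lambda>i. Yc i \<omega>) ?B)) \<omega>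
      = indicator (Ev m) \<omega> * (cmod (Nm k m \<omega>))\<^sup>2" if "\<omega> \<in> space P" for \<omega>
    using eqA[OF that] eqB by simp
  show "integrable P (\<lambda>\<omega>. indicator (Ev m) \<omega> * (cmod (Nm k m \<omega>))\<^sup>2)"
    using indep_var_integrable[OF ind2 iA iB] by (subst (asm) Bochner_Integration.integrable_cong[OF refl prodeq]) auto
  have "expectation (\<lambda>\<omega>. indicator (Ev m) \<omega> * (cmod (Nm k m \<omega>))\<^sup>2)
     = expectation (\<lambda>\<omega>. (Fa \<circ> (\<lambda>\<omega>. restrict (\<lambda>i. Yc i \<omega>) ?A)) \<omega> * (Gb \<circ> (\<lambda>\<omega>. restrict (\<lambda>i. Yc i \<omega>) ?B)) \<omega>)"
    by (intro Bochner_Integration.integral_cong refl prodeq[symmetric])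
  also have "\<dots> = expectation (Fa \<circ> (\<lambda>\<omega>. restrict (\<lambda>i. Yc i \<omega>) ?A)) * expectation (Gb \<circ> (\<lambda>\<omega>. restrict (\<lambda>i. Yc i \<omega>) ?B))"
    by (rule indep_var_lebesgue_integral[OF ind2 iA iB])
  also have "expectation (Fa \<circ> (\<lambda>\<omega>. restrict (\<lambda>i. Yc i \<omega>) ?A)) = expectation (indicator (Ev m) :: 'a \<Rightarrow> real)"
    by (intro Bochner_Integration.integral_cong refl eqA)
  also have "\<dots> = prob (Ev m)" by simp
  also have "expectation (Gb \<circ> (\<lambda>\<omega>. restrict (\<lambda>i. Yc i \<omega>) ?B)) = \<sigma>2 / m"
  proof -
    have "(Gb \<circ> (\<lambda>\<omega>. restrict (\<lambda>i. Yc i \<omega>) ?B)) = (\<lambda>\<omega>. (cmod (Nm k m \<omega>))\<^sup>2)"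
      using eqB by (rule ext)
    thus ?thesis using ENm(2)[OF m, of k] by simp
  qed
  finally show "expectation (\<lambda>\<omega>. indicator (Ev m) \<omega> * (cmod (Nm k m \<omega>))\<^sup>2) = prob (Ev m) * (\<sigma>2 / m)" .
qed

end


context rs begin

lemma sig_nn: "0 \<le> \<sigma>2"
proof -
  have "0 \<le> expectation (\<lambda>\<omega>. (Z 0 \<omega>)\<^sup>2)" by (intro Bochner_Integration.integral_nonneg) simp
  thus ?thesis using EZ20 by simp
qed

lemma measNm[measurable]: "(\<lambda>\<omega>. Nm k m \<omega>) \<in> borel_measurable P"
  unfolding Nm_def by measurable

lemma good_nn: "good \<omega> \<Longrightarrow> \<forall>m. 0 \<le> X m \<omega>"
  unfolding good_def by (auto intro: less_imp_le)

lemma good_ex: "good \<omega> \<Longrightarrow> \<exists>m. 1 < renS X m \<omega>"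
  unfolding good_def by auto

lemma good_cross: "good \<omega> \<Longrightarrow> renS X (renM X \<omega>) \<omega> \<le> 1 \<and> 1 < renS X (Suc (renM X \<omega>)) \<omega>"
  by (rule renM_cross[OF good_nn good_ex])

lemma good_le: "good \<omega> \<Longrightarrow> renS X i \<omega> \<le> real i * (lam / n)"
  by (rule renS_le) (auto simp: good_def)

lemma good_Mlow: "good \<omega> \<Longrightarrow> n < (real (renM X \<omega>) + 1) * lam"
proof -
  assume g: "good \<omega>"
  have "1 < real (Suc (renM X \<omega>)) * (lam / n)" using good_cross[OF g] good_le[OF g, of "Suc (renM X \<omega>)"] by linarith
  thus ?thesis using npos by (simp add: field_simps)
qed

lemma Ev_iff: "good \<omega> \<Longrightarrow> \<omega> \<in> space P \<Longrightarrow> \<omega> \<in> Ev m \<longleftrightarrow> renM X \<omega> = m"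
  unfolding Ev_def using renM_eq_iff[OF good_nn good_ex] by auto

lemma Ev_disj: "disjoint_family Ev"
  unfolding disjoint_family_on_def Ev_def
  by (auto simp: not_less) (metis linorder_neqE_nat not_less)

lemma N_bound: "(\<integral>\<^sup>+\<omega>. ennreal ((cmod (Nm k (renM X \<omega>) \<omega>))\<^sup>2) \<partial>P) \<le> ennreal (2 * lam * \<sigma>2 / n)"
proof -
  let ?f = "\<lambda>m \<omega>. ennreal (indicator (Ev m) \<omega> * (cmod (Nm k m \<omega>))\<^sup>2)"
  have "(\<integral>\<^sup>+\<omega>. ennreal ((cmod (Nm k (renM X \<omega>) \<omega>))\<^sup>2) \<partial>P) = (\<integral>\<^sup>+\<omega>. (\<Sum>m. ?f m \<omega>) \<partial>P)"
  proof (rule nn_integral_cong_AE)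
    show "AE \<omega> in P. ennreal ((cmod (Nm k (renM X \<omega>) \<omega>))\<^sup>2) = (\<Sum>m. ?f m \<omega>)"
      using AE_good
    proof (rule AE_mp, intro AE_I2 impI)
      fix \<omega> assume s: "\<omega> \<in> space P" and g: "good \<omega>"
      have "?f m \<omega> = (if m = renM X \<omega> then ennreal ((cmod (Nm k (renM X \<omega>) \<omega>))\<^sup>2) else 0)" for m
        using Ev_iff[OF g s, of m] by (auto simp: indicator_def)
      hence "(\<lambda>m. ?f m \<omega>) sums ennreal ((cmod (Nm k (renM X \<omega>) \<omega>))\<^sup>2)"
        using sums_single[of "renM X \<omega>" "\<lambda>_. ennreal ((cmod (Nm k (renM X \<omega>) \<omega>))\<^sup>2)"] by simp
      thus "ennreal ((cmod (Nm k (renM X \<omega>) \<omega>))\<^sup>2) = (\<Sum>m. ?f m \<omega>)" by (simp add: sums_iff)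
    qed
  qed
  also have "\<dots> = (\<Sum>m. \<integral>\<^sup>+\<omega>. ?f m \<omega> \<partial>P)"
    by (rule nn_integral_suminf) measurable
  also have "\<dots> \<le> (\<Sum>m. ennreal (2 * lam * \<sigma>2 / n) * emeasure P (Ev m))"
  proof (intro suminf_le allI summableI)
    fix m
    show "(\<integral>\<^sup>+\<omega>. ?f m \<omega> \<partial>P) \<le> ennreal (2 * lam * \<sigma>2 / n) * emeasure P (Ev m)"
    proof (cases "m = 0")
      case True thus ?thesis by (simp add: Nm_def)
    next
      case False
      hence m: "m \<ge> 1" by simp
      have "(\<integral>\<^sup>+\<omega>. ?f m \<omega> \<partial>P) = ennreal (prob (Ev m) * (\<sigma>2 / m))"
        using indep_ev_N[OF m, of k] by (subst nn_integral_eq_integral) auto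
      also have "\<dots> \<le> ennreal (prob (Ev m) * (2 * lam * \<sigma>2 / n))"
      proof (cases "n \<le> (real m + 1) * lam")
        case True
        have "(real m + 1) * lam \<le> 2 * real m * lam" using m lam by (simp add: algebra_simps)
        hence n2: "n \<le> 2 * real m * lam" using True by linarith
        have "1 / real m \<le> 2 * lam / n"
          using n2 m npos by (simp add: field_simps)
        hence "\<sigma>2 * (1 / m) \<le> \<sigma>2 * (2 * lam / n)" using sig_nn by (intro mult_left_mono) auto
        hence "\<sigma>2 / m \<le> 2 * lam * \<sigma>2 / n" by (simp add: ac_simps)
        thus ?thesis by (intro ennreal_leI mult_left_mono) auto
      next
        case False
        have "AE \<omega> in P. \<not> (\<omega> \<in> Ev m)"
          using AE_good
        proof (rule AE_mp, intro AE_I2 impI)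
          fix \<omega> assume g: "good \<omega>"
          have "renS X (Suc m) \<omega> \<le> (real m + 1) * (lam / n)" using good_le[OF g, of "Suc m"] by (simp add: algebra_simps)
          also have "\<dots> < 1" using False npos by (simp add: field_simps)
          finally show "\<omega> \<notin> Ev m" by (auto simp: Ev_def)
        qed
        hence "emeasure P {\<omega>\<in>space P. \<omega> \<in> Ev m} = 0" by (rule emeasure_eq_0_AE)
        moreover have "{\<omega>\<in>space P. \<omega> \<in> Ev m} = Ev m" using sets.sets_into_space[OF Ev_sets[of m]] by auto
        ultimately have "emeasure P (Ev m) = 0" by simp
        hence "prob (Ev m) = 0" by (simp add: emeasure_eq_measure)
        thus ?thesis by simp
      qed
      also have "\<dots> = ennreal (2 * lam * \<sigma>2 / n) * emeasure P (Ev m)"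
      proof -
        have nn: "0 \<le> 2 * lam * \<sigma>2 / n" using lam npos sig_nn by simp
        show ?thesis by (metis ennreal_mult[OF nn measure_nonneg] emeasure_eq_measure mult.commute)
      qed
      finally show ?thesis .
    qed
  qed
  also have "\<dots> = ennreal (2 * lam * \<sigma>2 / n) * emeasure P (\<Union>m. Ev m)"
  proof -
    have "range Ev \<subseteq> sets P" using Ev_sets by blast
    thus ?thesis using suminf_emeasure[OF _ Ev_disj, of P] by simp
  qed
  also have "\<dots> \<le> ennreal (2 * lam * \<sigma>2 / n) * 1"
    by (intro mult_left_mono emeasure_le_1) auto
  finally show ?thesis by simp
qed

end


context rs begin

definition "Lc = 2 * pi * real b * (2 * real b + 1)"
definition "Bv k \<omega> = (1 / of_nat (renM X \<omega>)) * (\<Sum>i=1..renM X \<omega>. complex_of_real (g (renS X i \<omega>))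
     * exp (- (\<i> * of_real (2 * pi * of_int k * of_nat i / of_nat (renM X \<omega>))))) - fcoef g k"
definition "Dv i \<omega> = renS X i \<omega> - real i / n"
definition "Qv \<omega> = \<bar>real (renM X \<omega>) / n - 1\<bar>"
definition "Kn = nat \<lceil>2 * n\<rceil>"
definition "n0 = max 4 (lam * (2 * real b + 2))"

lemma Lc_nn: "0 \<le> Lc" unfolding Lc_def by simp

lemma B_le2: "cmod (Bv k \<omega>) \<le> 2"
proof -
  let ?M = "renM X \<omega>"
  have "cmod ((1 / of_nat ?M) * (\<Sum>i=1..?M. complex_of_real (g (renS X i \<omega>))
     * exp (- (\<i> * of_real (2 * pi * of_int k * of_nat i / of_nat ?M))))) \<le> 1"
  proof (cases "?M = 0")
    case True thus ?thesis by simp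
  next
    case False
    have "cmod (\<Sum>i=1..?M. complex_of_real (g (renS X i \<omega>))
     * exp (- (\<i> * of_real (2 * pi * of_int k * of_nat i / of_nat ?M)))) \<le> (\<Sum>i=1..?M. 1)"
    proof (rule order_trans[OF norm_sum sum_mono])
      fix i
      have "cmod (exp (- (\<i> * of_real (2 * pi * of_int k * of_nat i / of_nat ?M)))) = 1"
        using norm_exp_i_times[of "- (2 * pi * of_int k * of_nat i / of_nat ?M)"] by simp
      thus "cmod (complex_of_real (g (renS X i \<omega>)) * exp (- (\<i> * of_real (2 * pi * of_int k * of_nat i / of_nat ?M)))) \<le> 1"
        using gbnd by (simp add: norm_mult)
    qed
    thus ?thesis using False by (simp add: norm_mult norm_divide field_simps)
  qed
  moreover have "cmod (fcoef g k) \<le> 1" by (rule fcoef_bound[OF gbnd])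
  ultimately show ?thesis unfolding Bv_def
    using norm_triangle_ineq4[of "(1 / of_nat ?M) * (\<Sum>i=1..?M. complex_of_real (g (renS X i \<omega>))
     * exp (- (\<i> * of_real (2 * pi * of_int k * of_nat i / of_nat ?M))))" "fcoef g k"] by linarith
qed

lemma sq_sum_le: "((x::real) + y)\<^sup>2 \<le> 2 * x\<^sup>2 + 2 * y\<^sup>2"
proof -
  have "0 \<le> (x - y)\<^sup>2" by simp
  thus ?thesis by (simp add: power2_eq_square algebra_simps)
qed

lemma aux_alg: "(M::real) \<noteq> 0 \<Longrightarrow> (1/M)*(L*S + M*(L*Q)) = L*((1/M)*S) + L*Q"
  by (simp add: field_simps)

lemma B_det:
  assumes g: "good \<omega>" and nn0: "n \<ge> n0" and k: "k \<in> {- int b..int b}"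
  shows "(cmod (Bv k \<omega>))\<^sup>2 \<le> (4 * lam * Lc\<^sup>2 / n) * (\<Sum>i\<in>{1..Kn}. (Dv i \<omega>)\<^sup>2) + (4 + 2 * Lc\<^sup>2) * (min 1 (Qv \<omega>))\<^sup>2"
proof -
  define M where "M = renM X \<omega>"
  have Mlow: "n < (real M + 1) * lam" using good_Mlow[OF g] by (simp add: M_def)
  have n4: "n \<ge> 4" and nl: "n \<ge> lam * (2 * real b + 2)" using nn0 by (auto simp: n0_def)
  have "lam * (2 * real b + 2) < lam * (real M + 1)" using Mlow nl by (simp add: mult.commute)
  hence M2b: "2 * b < M" using lam by simp
  hence M1: "M \<ge> 1" by simp
  have "(real M + 1) * lam \<le> 2 * real M * lam" using M1 lam by (simp add: algebra_simps)
  hence invM: "1 / real M \<le> 2 * lam / n" using Mlow M1 npos by (simp add: field_simps)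
  have Bn: "(cmod (Bv k \<omega>))\<^sup>2 \<le> 4"
    using power_mono[OF B_le2[of k \<omega>] norm_ge_zero, of 2] by simp
  have Dnn: "0 \<le> (4 * lam * Lc\<^sup>2 / n) * (\<Sum>i\<in>{1..Kn}. (Dv i \<omega>)\<^sup>2)" using lam npos
    by (intro mult_nonneg_nonneg divide_nonneg_nonneg sum_nonneg) auto
  show ?thesis
  proof (cases "M \<le> Kn")
    case False
    hence "real M > 2 * n" unfolding Kn_def by linarith
    hence "Qv \<omega> > 1" using npos unfolding Qv_def M_def[symmetric] by (simp add: field_simps)
    hence "min 1 (Qv \<omega>) = 1" by simp
    hence "(4 + 2 * Lc\<^sup>2) * (min 1 (Qv \<omega>))\<^sup>2 \<ge> 4" by simp
    thus ?thesis using Bn Dnn by linarith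
  next
    case True
    define w where "w i = exp (- (\<i> * of_real (2 * pi * of_int k * of_nat i / of_nat M)))" for i :: nat
    have w1: "cmod (w i) = 1" for i unfolding w_def
      using norm_exp_i_times[of "- (2 * pi * of_int k * of_nat i / of_nat M)"] by simp
    have dft': "(\<Sum>i=1..M. complex_of_real (g (real i / real M)) * w i) = of_nat M * fcoef g k"
      unfolding w_def by (rule dft[OF gexp M2b k])
    have Beq: "Bv k \<omega> = (1 / of_nat M) * (\<Sum>i=1..M. complex_of_real (g (renS X i \<omega>) - g (real i / real M)) * w i)"
    proof -
      have "Bv k \<omega> = (1 / of_nat M) * (\<Sum>i=1..M. complex_of_real (g (renS X i \<omega>)) * w i) - (1 / of_nat M) * (of_nat M * fcoef g k)"
        unfolding Bv_def M_def[symmetric] w_def using M1 by simp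
      also have "\<dots> = (1 / of_nat M) * (\<Sum>i=1..M. complex_of_real (g (renS X i \<omega>)) * w i) - (1 / of_nat M) * (\<Sum>i=1..M. complex_of_real (g (real i / real M)) * w i)"
        by (simp only: dft')
      also have "\<dots> = (1 / of_nat M) * (\<Sum>i=1..M. complex_of_real (g (renS X i \<omega>) - g (real i / real M)) * w i)"
        by (simp add: sum_subtractf left_diff_distrib diff_divide_distrib)
      finally show ?thesis .
    qed
    have Qi: "\<bar>real i / n - real i / real M\<bar> \<le> Qv \<omega>" if "i \<le> M" for i
    proof -
      have "real i / n - real i / real M = (real i / real M) * (real M / n - 1)"
        using M1 npos by (simp add: field_simps)
      hence "\<bar>real i / n - real i / real M\<bar> = (real i / real M) * \<bar>real M / n - 1\<bar>"
        by (simp add: abs_mult)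
      also have "\<dots> \<le> 1 * \<bar>real M / n - 1\<bar>" using that M1 by (intro mult_right_mono) auto
      finally show ?thesis unfolding Qv_def M_def by simp
    qed
    have tm: "\<bar>g (renS X i \<omega>) - g (real i / real M)\<bar> \<le> Lc * (\<bar>Dv i \<omega>\<bar> + Qv \<omega>)" if "i \<le> M" for i
    proof -
      have "\<bar>g (renS X i \<omega>) - g (real i / real M)\<bar> \<le> Lc * \<bar>renS X i \<omega> - real i / real M\<bar>"
        unfolding Lc_def by (rule g_lip[OF gbnd gexp])
      also have "\<bar>renS X i \<omega> - real i / real M\<bar> \<le> \<bar>Dv i \<omega>\<bar> + Qv \<omega>"
        using Qi[OF that] unfolding Dv_def by linarith
      hence "Lc * \<bar>renS X i \<omega> - real i / real M\<bar> \<le> Lc * (\<bar>Dv i \<omega>\<bar> + Qv \<omega>)"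
        using Lc_nn by (intro mult_left_mono) auto
      finally show ?thesis .
    qed
    define u where "u = (1 / real M) * (\<Sum>i=1..M. \<bar>Dv i \<omega>\<bar>)"
    have "cmod (Bv k \<omega>) \<le> (1 / real M) * (\<Sum>i=1..M. Lc * (\<bar>Dv i \<omega>\<bar> + Qv \<omega>))"
    proof -
      have "cmod (Bv k \<omega>) = (1 / real M) * cmod (\<Sum>i=1..M. complex_of_real (g (renS X i \<omega>) - g (real i / real M)) * w i)"
        unfolding Beq by (simp add: norm_mult norm_divide)
      also have "\<dots> \<le> (1 / real M) * (\<Sum>i=1..M. Lc * (\<bar>Dv i \<omega>\<bar> + Qv \<omega>))"
      proof (intro mult_left_mono order_trans[OF norm_sum sum_mono])
        fix i assume "i \<in> {1..M}"
        thus "cmod (complex_of_real (g (renS X i \<omega>) - g (real i / real M)) * w i) \<le> Lc * (\<bar>Dv i \<omega>\<bar> + Qv \<omega>)"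
          using tm[of i] by (simp add: norm_mult w1 of_real_diff[symmetric] del: of_real_diff)
      qed simp
      finally show ?thesis .
    qed
    also have "\<dots> = Lc * u + Lc * Qv \<omega>"
    proof -
      have "(\<Sum>i=1..M. Lc * (\<bar>Dv i \<omega>\<bar> + Qv \<omega>)) = Lc * (\<Sum>i=1..M. \<bar>Dv i \<omega>\<bar>) + real M * (Lc * Qv \<omega>)"
        by (simp add: sum.distrib sum_distrib_left distrib_left)
      thus ?thesis unfolding u_def using aux_alg[of "real M"] M1 by simp
    qed
    finally have Bu: "cmod (Bv k \<omega>) \<le> Lc * u + Lc * Qv \<omega>" .
    have u0: "0 \<le> u" unfolding u_def by (simp add: sum_nonneg)
    have Q0: "0 \<le> Qv \<omega>" unfolding Qv_def by simp
    have "(cmod (Bv k \<omega>))\<^sup>2 \<le> (Lc * u + Lc * Qv \<omega>)\<^sup>2"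
      using Bu by (intro power_mono) auto
    also have "\<dots> \<le> 2 * (Lc * u)\<^sup>2 + 2 * (Lc * Qv \<omega>)\<^sup>2" by (rule sq_sum_le)
    finally have B0: "(cmod (Bv k \<omega>))\<^sup>2 \<le> 2 * (Lc * u)\<^sup>2 + 2 * (Lc * Qv \<omega>)\<^sup>2" .
    have Lu: "(Lc * u)\<^sup>2 \<le> Lc\<^sup>2 * ((2 * lam / n) * (\<Sum>i\<in>{1..Kn}. (Dv i \<omega>)\<^sup>2))"
    proof -
      have "u\<^sup>2 = (1 / real M)\<^sup>2 * (\<Sum>i=1..M. \<bar>Dv i \<omega>\<bar>)\<^sup>2" unfolding u_def by (simp only: power_mult_distrib)
      also have "\<dots> \<le> (1 / real M)\<^sup>2 * ((\<Sum>i=1..M. (\<bar>Dv i \<omega>\<bar>)\<^sup>2) * real M)"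
        using sum_squared_le_sum_of_squares[of "\<lambda>i. \<bar>Dv i \<omega>\<bar>" "{1..M}"] by (intro mult_left_mono) auto
      also have "\<dots> = (1 / real M) * (\<Sum>i=1..M. (Dv i \<omega>)\<^sup>2)" using M1 by (simp add: power2_eq_square)
      also have "\<dots> \<le> (2 * lam / n) * (\<Sum>i\<in>{1..Kn}. (Dv i \<omega>)\<^sup>2)"
        using invM True lam npos by (intro mult_mono sum_mono2) (auto simp: sum_nonneg)
      finally have "u\<^sup>2 \<le> (2 * lam / n) * (\<Sum>i\<in>{1..Kn}. (Dv i \<omega>)\<^sup>2)" .
      hence "Lc\<^sup>2 * u\<^sup>2 \<le> Lc\<^sup>2 * ((2 * lam / n) * (\<Sum>i\<in>{1..Kn}. (Dv i \<omega>)\<^sup>2))"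
        by (rule mult_left_mono) simp
      thus ?thesis by (simp only: power_mult_distrib)
    qed
    have e1: "2 * (Lc\<^sup>2 * ((2 * lam / n) * (\<Sum>i\<in>{1..Kn}. (Dv i \<omega>)\<^sup>2))) = (4 * lam * Lc\<^sup>2 / n) * (\<Sum>i\<in>{1..Kn}. (Dv i \<omega>)\<^sup>2)"
      by simp
    have e2: "(Lc * Qv \<omega>)\<^sup>2 = Lc\<^sup>2 * (Qv \<omega>)\<^sup>2" by (simp add: power_mult_distrib)
    have B1: "(cmod (Bv k \<omega>))\<^sup>2 \<le> (4 * lam * Lc\<^sup>2 / n) * (\<Sum>i\<in>{1..Kn}. (Dv i \<omega>)\<^sup>2) + 2 * Lc\<^sup>2 * (Qv \<omega>)\<^sup>2"
      using B0 Lu e1 e2 by linarith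
    show ?thesis
    proof (cases "Qv \<omega> \<le> 1")
      case True
      hence mq: "min 1 (Qv \<omega>) = Qv \<omega>" by simp
      have "2 * Lc\<^sup>2 * (Qv \<omega>)\<^sup>2 \<le> (4 + 2 * Lc\<^sup>2) * (Qv \<omega>)\<^sup>2" by (intro mult_right_mono) auto
      thus ?thesis unfolding mq using B1 by linarith
    next
      case False
      hence "min 1 (Qv \<omega>) = 1" by simp
      hence "(4 + 2 * Lc\<^sup>2) * (min 1 (Qv \<omega>))\<^sup>2 \<ge> 4" by simp
      thus ?thesis using Bn Dnn by linarith
    qed
  qed
qed

end


context rs begin

lemma Yprod:
  shows "integrable P (\<lambda>\<omega>. (X m \<omega> - 1/n) * (X l \<omega> - 1/n))"
    and "expectation (\<lambda>\<omega>. (X m \<omega> - 1/n) * (X l \<omega> - 1/n)) \<le> (if m = l then (lam / n)\<^sup>2 else 0)"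
proof -
  have bnd: "AE \<omega> in P. \<bar>X m \<omega> - 1/n\<bar> \<le> lam / n" for m
  proof -
    have h: "1 / n \<le> lam / n" using lam npos by (simp add: divide_right_mono)
    show ?thesis
    proof (rule eventually_mono[OF AEXm[of m]])
      fix \<omega> assume a: "0 < X m \<omega> \<and> X m \<omega> \<le> lam / n"
      have "0 \<le> 1 / n" using npos by simp
      thus "\<bar>X m \<omega> - 1/n\<bar> \<le> lam / n" using a h unfolding abs_le_iff by linarith
    qed
  qed
  have iY: "integrable P (\<lambda>\<omega>. X m \<omega> - 1/n)" for m using intX by simp
  have EY: "expectation (\<lambda>\<omega>. X m \<omega> - 1/n) = 0" for m
    using intX[of m] EXm[of m] by (simp add: Bochner_Integration.integral_diff prob_space)
  have "integrable P (\<lambda>\<omega>. (X m \<omega> - 1/n) * (X l \<omega> - 1/n)) \<and>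
        expectation (\<lambda>\<omega>. (X m \<omega> - 1/n) * (X l \<omega> - 1/n)) \<le> (if m = l then (lam / n)\<^sup>2 else 0)"
  proof (cases "m = l")
    case True
    have b2: "AE \<omega> in P. norm ((X m \<omega> - 1/n) * (X m \<omega> - 1/n)) \<le> (lam / n)\<^sup>2"
      using bnd[of m]
    proof (rule eventually_mono)
      fix \<omega> assume "\<bar>X m \<omega> - 1/n\<bar> \<le> lam / n"
      hence "\<bar>X m \<omega> - 1/n\<bar>\<^sup>2 \<le> (lam / n)\<^sup>2" by (intro power_mono) auto
      thus "norm ((X m \<omega> - 1/n) * (X m \<omega> - 1/n)) \<le> (lam / n)\<^sup>2" by (simp add: power2_eq_square abs_mult)
    qed
    have i: "integrable P (\<lambda>\<omega>. (X m \<omega> - 1/n) * (X m \<omega> - 1/n))"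
      by (rule integrable_const_bound[OF b2]) simp
    have "expectation (\<lambda>\<omega>. (X m \<omega> - 1/n) * (X m \<omega> - 1/n)) \<le> expectation (\<lambda>\<omega>. (lam / n)\<^sup>2)"
      by (intro integral_mono_AE i) (use b2 in \<open>auto elim!: eventually_mono\<close>)
    thus ?thesis using True i by (simp add: prob_space)
  next
    case False
    have ind: "indep_var borel (Yc (Inl m)) borel (Yc (Inl l))" using False by (intro indep_pair) auto
    have ind2: "indep_var borel ((\<lambda>x. x - 1/n) \<circ> X m) borel ((\<lambda>x. x - 1/n) \<circ> X l)"
      using indep_var_compose[OF ind, of "\<lambda>x. x - 1/n" borel "\<lambda>x. x - 1/n" borel] by simp
    have "integrable P (\<lambda>\<omega>. (X m \<omega> - 1/n) * (X l \<omega> - 1/n))"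
      using indep_var_integrable[OF ind2] iY by (simp add: comp_def)
    moreover have "expectation (\<lambda>\<omega>. (X m \<omega> - 1/n) * (X l \<omega> - 1/n)) = 0"
      using indep_var_lebesgue_integral[OF ind2] iY EY by (simp add: comp_def)
    ultimately show ?thesis using False by simp
  qed
  thus "integrable P (\<lambda>\<omega>. (X m \<omega> - 1/n) * (X l \<omega> - 1/n))"
    "expectation (\<lambda>\<omega>. (X m \<omega> - 1/n) * (X l \<omega> - 1/n)) \<le> (if m = l then (lam / n)\<^sup>2 else 0)" by auto
qed

lemma ED2:
  shows "integrable P (\<lambda>\<omega>. (Dv i \<omega>)\<^sup>2)" and "expectation (\<lambda>\<omega>. (Dv i \<omega>)\<^sup>2) \<le> real i * (lam / n)\<^sup>2"
proof -
  have eq: "(Dv i \<omega>)\<^sup>2 = (\<Sum>m<i. \<Sum>l<i. (X m \<omega> - 1/n) * (X l \<omega> - 1/n))" for \<omega>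
  proof -
    have "Dv i \<omega> = (\<Sum>m<i. X m \<omega> - 1/n)" by (simp add: Dv_def renS_def sum_subtractf)
    thus ?thesis by (simp add: power2_eq_square sum_product)
  qed
  show "integrable P (\<lambda>\<omega>. (Dv i \<omega>)\<^sup>2)" unfolding eq
    by (intro Bochner_Integration.integrable_sum Yprod(1))
  have "expectation (\<lambda>\<omega>. (Dv i \<omega>)\<^sup>2) = (\<Sum>m<i. \<Sum>l<i. expectation (\<lambda>\<omega>. (X m \<omega> - 1/n) * (X l \<omega> - 1/n)))"
    unfolding eq by (simp add: Bochner_Integration.integral_sum Bochner_Integration.integrable_sum Yprod(1))
  also have "\<dots> \<le> (\<Sum>m<i. \<Sum>l<i. (if m = l then (lam / n)\<^sup>2 else 0))"
    by (intro sum_mono Yprod(2))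
  also have "\<dots> = real i * (lam / n)\<^sup>2" by simp
  finally show "expectation (\<lambda>\<omega>. (Dv i \<omega>)\<^sup>2) \<le> real i * (lam / n)\<^sup>2" .
qed

end


lemma hexp:
  fixes n lam m K t \<epsilon> :: real
  assumes "0 < n" "0 < lam" "0 < m" "m \<le> K * n" "0 \<le> t" "t \<le> \<epsilon>"
  shows "- 2 * \<epsilon>\<^sup>2 / (m * (lam / n)\<^sup>2) \<le> - 2 * t\<^sup>2 * n / (K * lam\<^sup>2)"
proof -
  have K: "K > 0"
  proof (rule ccontr)
    assume "\<not> K > 0"
    hence "K * n \<le> 0" using assms(1) by (simp add: mult_nonpos_nonneg)
    thus False using assms(3,4) by linarith
  qed
  have c: "0 < (lam / n)\<^sup>2" using assms by simp
  have "t\<^sup>2 \<le> \<epsilon>\<^sup>2" using assms by (intro power_mono) auto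
  have 1: "2 * t\<^sup>2 / (K * n * (lam / n)\<^sup>2) \<le> 2 * t\<^sup>2 / (m * (lam / n)\<^sup>2)"
    using assms c K by (intro divide_left_mono mult_right_mono mult_pos_pos) auto
  have 2: "2 * t\<^sup>2 / (m * (lam / n)\<^sup>2) \<le> 2 * \<epsilon>\<^sup>2 / (m * (lam / n)\<^sup>2)"
    using \<open>t\<^sup>2 \<le> \<epsilon>\<^sup>2\<close> assms c by (intro divide_right_mono) auto
  have 3: "2 * t\<^sup>2 / (K * n * (lam / n)\<^sup>2) = 2 * t\<^sup>2 * n / (K * lam\<^sup>2)"
    using assms K by (simp add: field_simps power2_eq_square)
  show ?thesis using 1 2 3 by simp
qed

lemma natceil_le: "0 \<le> (x::real) \<Longrightarrow> real (nat \<lceil>x\<rceil>) \<le> x + 1"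
  using ceiling_correct[of x] by (simp add: of_nat_nat)

lemma natfloor_le: "0 \<le> (x::real) \<Longrightarrow> real (nat \<lfloor>x\<rfloor>) \<le> x"
  by (simp add: of_nat_nat)

context rs begin

lemma tail_prob:
  assumes n4: "n \<ge> 4" and j1: "j \<ge> 1" and js: "real j \<le> sqrt n"
  shows "emeasure P {\<omega>\<in>space P. real j \<le> min 1 (Qv \<omega>) * sqrt n} \<le> ennreal (2 * exp (- (real j)\<^sup>2 / (4 * lam\<^sup>2)))"
proof -
  define s where "s = real j / sqrt n"
  have sn: "sqrt n > 0" using npos by simp
  have sqn: "(sqrt n)\<^sup>2 = n" using npos by simp
  have s0: "0 < s" using j1 sn by (simp add: s_def)
  have s1: "s \<le> 1" using js sn by (simp add: s_def)
  have s2n: "s\<^sup>2 * n = (real j)\<^sup>2" using sqn sn by (simp add: s_def power_divide)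
  have sq2: "sqrt n \<ge> 2" using n4 real_sqrt_le_mono[of 4 n] by simp
  have shalf: "s / 2 \<ge> 1 / n"
  proof -
    have "s * n = real j * sqrt n" using sqn sn by (simp add: s_def field_simps power2_eq_square)
    also have "\<dots> \<ge> 1 * 2" using j1 sq2 by (intro mult_mono) auto
    finally show ?thesis using npos by (simp add: field_simps)
  qed
  define m1 where "m1 = nat \<lceil>n * (1 + s)\<rceil>"
  define m2 where "m2 = Suc (nat \<lfloor>n * (1 - s)\<rfloor>)"
  have m1a: "real m1 \<ge> n * (1 + s)" unfolding m1_def by (rule real_nat_ceiling_ge)
  have x0: "0 \<le> n * (1 + s)" using npos s0 by simp
  have m1b: "real m1 \<le> 3 * n" proof -
    have "real m1 \<le> n * (1 + s) + 1" unfolding m1_def using natceil_le[OF x0] .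
    moreover have "n * (1 + s) \<le> n * 2" using s1 npos by (intro mult_left_mono) auto
    ultimately show ?thesis using n4 by linarith
  qed
  have "0 < n * (1 + s)" using npos s0 by simp
  hence m1p: "m1 \<ge> 1" using m1a by (cases m1) auto
  have y0: "0 \<le> n * (1 - s)" using npos s1 by simp
  have m2a: "real m2 \<le> n * (1 - s) + 1" unfolding m2_def using natfloor_le[OF y0] by simp
  have m2b: "real m2 \<le> 2 * n"
  proof -
    have "n * (1 - s) \<le> n * 1" using s0 npos by (intro mult_left_mono) auto
    thus ?thesis using m2a n4 by linarith
  qed
  have m2p: "m2 \<ge> 1" unfolding m2_def by simp
  let ?A1 = "{\<omega>\<in>space P. renS X m1 \<omega> \<le> real m1 / n - (real m1 / n - 1)}"
  let ?A2 = "{\<omega>\<in>space P. renS X m2 \<omega> \<ge> real m2 / n + (1 - real m2 / n)}"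
  have "emeasure P {\<omega>\<in>space P. real j \<le> min 1 (Qv \<omega>) * sqrt n} \<le> emeasure P (?A1 \<union> ?A2)"
  proof (rule emeasure_mono_AE)
    show "?A1 \<union> ?A2 \<in> sets P" by measurable
    show "AE \<omega> in P. \<omega> \<in> {\<omega>\<in>space P. real j \<le> min 1 (Qv \<omega>) * sqrt n} \<longrightarrow> \<omega> \<in> ?A1 \<union> ?A2"
      using AE_good
    proof (rule AE_mp, intro AE_I2 impI)
      fix \<omega> assume sp: "\<omega> \<in> space P" and g: "good \<omega>" and ev: "\<omega> \<in> {\<omega>\<in>space P. real j \<le> min 1 (Qv \<omega>) * sqrt n}"
      define M where "M = renM X \<omega>"
      have "real j \<le> min 1 (Qv \<omega>) * sqrt n" using ev by simp
      hence "s \<le> min 1 (Qv \<omega>)" unfolding s_def using sn by (simp only: pos_divide_le_eq)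
      hence "s \<le> \<bar>real M / n - 1\<bar>" unfolding Qv_def M_def by simp
      hence "real M / n \<ge> 1 + s \<or> real M / n \<le> 1 - s" by linarith
      thus "\<omega> \<in> ?A1 \<union> ?A2"
      proof
        assume "real M / n \<ge> 1 + s"
        hence "real M \<ge> n * (1 + s)" using npos by (simp add: field_simps)
        hence "M \<ge> m1" unfolding m1_def by (simp add: nat_le_iff ceiling_le_iff)
        hence "renS X m1 \<omega> \<le> renS X M \<omega>" using renS_mono[where X=X and \<omega>=\<omega>, OF good_nn[OF g]] by blast
        also have "\<dots> \<le> 1" using good_cross[OF g] by (simp add: M_def)
        finally show ?thesis using sp by simp
      next
        assume "real M / n \<le> 1 - s"
        hence "real M \<le> n * (1 - s)" using npos by (simp add: field_simps)
        hence "M \<le> nat \<lfloor>n * (1 - s)\<rfloor>" by linarith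
        hence "Suc M \<le> m2" unfolding m2_def by simp
        hence "renS X (Suc M) \<omega> \<le> renS X m2 \<omega>" using renS_mono[where X=X and \<omega>=\<omega>, OF good_nn[OF g]] by blast
        moreover have "1 < renS X (Suc M) \<omega>" using good_cross[OF g] by (simp add: M_def)
        ultimately show ?thesis using sp by simp
      qed
    qed
  qed
  also have "\<dots> \<le> emeasure P ?A1 + emeasure P ?A2" by (rule emeasure_subadditive) measurable
  also have "emeasure P ?A1 \<le> ennreal (exp (- (real j)\<^sup>2 / (4 * lam\<^sup>2)))"
  proof -
    have e1: "real m1 / n - 1 \<ge> s" using m1a npos by (simp add: field_simps)
    have "prob ?A1 \<le> exp (- 2 * (real m1 / n - 1)\<^sup>2 / (real m1 * (lam / n)\<^sup>2))"
      using e1 s0 by (intro hoeff_le m1p) simp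
    also have "\<dots> \<le> exp (- 2 * s\<^sup>2 * n / (3 * lam\<^sup>2))"
      using e1 m1b m1p npos lam s0 by (intro exp_mono hexp) auto
    also have "\<dots> \<le> exp (- (real j)\<^sup>2 / (4 * lam\<^sup>2))"
    proof (intro exp_mono)
      have "- 2 * s\<^sup>2 * n / (3 * lam\<^sup>2) = - 2 * (real j)\<^sup>2 / (3 * lam\<^sup>2)" using s2n by (simp add: mult.assoc)
      also have "\<dots> \<le> - (real j)\<^sup>2 / (4 * lam\<^sup>2)" using lam by (simp add: field_simps)
      finally show "- 2 * s\<^sup>2 * n / (3 * lam\<^sup>2) \<le> - (real j)\<^sup>2 / (4 * lam\<^sup>2)" .
    qed
    finally show ?thesis by (simp add: emeasure_eq_measure)
  qed
  also have "emeasure P ?A2 \<le> ennreal (exp (- (real j)\<^sup>2 / (4 * lam\<^sup>2)))"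
  proof -
    have e2: "1 - real m2 / n \<ge> s / 2" using m2a shalf npos by (simp add: field_simps) 
    have "prob ?A2 \<le> exp (- 2 * (1 - real m2 / n)\<^sup>2 / (real m2 * (lam / n)\<^sup>2))"
      using e2 s0 by (intro hoeff_ge m2p) simp
    also have "\<dots> \<le> exp (- 2 * (s / 2)\<^sup>2 * n / (2 * lam\<^sup>2))"
      using e2 m2b m2p npos lam s0 by (intro exp_mono hexp) auto
    also have "- 2 * (s / 2)\<^sup>2 * n / (2 * lam\<^sup>2) = - (real j)\<^sup>2 / (4 * lam\<^sup>2)"
      using s2n[symmetric] by (simp add: power_divide field_simps)
    finally show ?thesis by (simp add: emeasure_eq_measure)
  qed
  finally show ?thesis by (simp add: ennreal_plus[symmetric] del: ennreal_plus)
qed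

end


lemma sum_odd_sq: "(\<Sum>j\<le>J. 2 * real j + 1) = (real J + 1)\<^sup>2"
  by (induction J) (auto simp: power2_eq_square algebra_simps)

lemma layer:
  fixes t :: real
  assumes t: "0 \<le> t"
  shows "ennreal (t\<^sup>2) \<le> (\<Sum>j. if real j \<le> t then ennreal (2 * real j + 1) else 0)"
proof -
  define J where "J = nat \<lfloor>t\<rfloor>"
  have JJ: "real J \<le> t" "t < real J + 1" using t unfolding J_def by (simp_all add: of_nat_nat)
  have "(\<Sum>j. if real j \<le> t then ennreal (2 * real j + 1) else 0) = (\<Sum>j\<in>{..J}. if real j \<le> t then ennreal (2 * real j + 1) else 0)"
  proof (rule suminf_finite)
    fix j assume "j \<notin> {..J}"
    hence "real j \<ge> real J + 1" by simp
    thus "(if real j \<le> t then ennreal (2 * real j + 1) else 0) = 0" using JJ by simp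
  qed simp
  also have "\<dots> = (\<Sum>j\<in>{..J}. ennreal (2 * real j + 1))"
    using JJ by (intro sum.cong refl) auto
  also have "\<dots> = ennreal (\<Sum>j\<in>{..J}. 2 * real j + 1)" by (rule sum_ennreal) simp
  also have "\<dots> = ennreal ((real J + 1)\<^sup>2)" by (simp only: sum_odd_sq)
  finally have eq: "(\<Sum>j. if real j \<le> t then ennreal (2 * real j + 1) else 0) = ennreal ((real J + 1)\<^sup>2)" .
  have "t\<^sup>2 \<le> (real J + 1)\<^sup>2" using JJ t by (intro power_mono) auto
  thus ?thesis unfolding eq by (rule ennreal_leI)
qed

lemma exp_quad: "0 \<le> x \<Longrightarrow> (x / 2)\<^sup>2 \<le> exp (x::real)"
proof -
  assume x: "0 \<le> x"
  have "x / 2 \<le> 1 + x / 2" by simp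
  also have "\<dots> \<le> exp (x / 2)" by (rule exp_ge_add_one_self)
  finally have "(x / 2)\<^sup>2 \<le> (exp (x / 2))\<^sup>2" using x by (intro power_mono) auto
  also have "(exp (x / 2))\<^sup>2 = exp x" by (simp add: power2_eq_square exp_add[symmetric])
  finally show ?thesis .
qed

definition Sgf :: "real \<Rightarrow> nat \<Rightarrow> real" where
  "Sgf lam j = (2 * real j + 1) * (2 * exp (- (real j)\<^sup>2 / (4 * lam\<^sup>2)))"

lemma Sgf_nn: "0 \<le> Sgf lam j" unfolding Sgf_def by simp

lemma Sgf_summable:
  assumes lam: "lam > 0"
  shows "summable (Sgf lam)"
proof (rule summable_comparison_test')
  show "summable (\<lambda>j. (384 * lam ^ 4) * inverse (real j ^ 2))"
    by (intro summable_mult inverse_power_summable) simp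
  fix j :: nat assume j: "j \<ge> 1"
  define a where "a = 1 / (4 * lam\<^sup>2)"
  have a: "a > 0" using lam by (simp add: a_def)
  have e: "exp (- (real j)\<^sup>2 / (4 * lam\<^sup>2)) = inverse (exp (a * (real j)\<^sup>2))"
    by (simp add: a_def exp_minus[symmetric])
  have q: "(a * (real j)\<^sup>2 / 2)\<^sup>2 \<le> exp (a * (real j)\<^sup>2)" using a by (intro exp_quad) simp
  have qp: "0 < (a * (real j)\<^sup>2 / 2)\<^sup>2" using a j by simp
  have "norm (Sgf lam j) = (2 * real j + 1) * 2 * inverse (exp (a * (real j)\<^sup>2))"
    unfolding Sgf_def e by simp
  also have "\<dots> \<le> (3 * real j) * 2 * inverse ((a * (real j)\<^sup>2 / 2)\<^sup>2)"
    using j q qp by (intro mult_mono le_imp_inverse_le) auto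
  also have "\<dots> = (24 / a\<^sup>2) * inverse (real j ^ 3)"
    using j a by (simp add: field_simps power2_eq_square power3_eq_cube)
  also have "\<dots> \<le> (24 / a\<^sup>2) * inverse (real j ^ 2)"
    using j a by (intro mult_left_mono le_imp_inverse_le power_increasing) auto
  also have "24 / a\<^sup>2 = 384 * lam ^ 4" using lam by (simp add: a_def field_simps power2_eq_square eval_nat_numeral)
  finally show "norm (Sgf lam j) \<le> (384 * lam ^ 4) * inverse (real j ^ 2)" .
qed

context rs begin

lemma measM[measurable]: "renM X \<in> measurable P (count_space UNIV)"
  unfolding renM_def by measurable

lemma measQ[measurable]: "Qv \<in> borel_measurable P"
  unfolding Qv_def by measurable

lemma measD[measurable]: "Dv i \<in> borel_measurable P"
  unfolding Dv_def by measurable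

lemma Emin:
  assumes n4: "n \<ge> 4"
  shows "integrable P (\<lambda>\<omega>. (min 1 (Qv \<omega>))\<^sup>2)"
    and "expectation (\<lambda>\<omega>. (min 1 (Qv \<omega>))\<^sup>2) \<le> (\<Sum>j. Sgf lam j) / n"
proof -
  let ?t = "\<lambda>\<omega>. min 1 (Qv \<omega>) * sqrt n"
  let ?E = "\<lambda>j. {\<omega>\<in>space P. real j \<le> ?t \<omega>}"
  have Esets[measurable]: "?E j \<in> sets P" for j by measurable
  have pw: "ennreal ((min 1 (Qv \<omega>))\<^sup>2) \<le> (\<Sum>j. ennreal ((2 * real j + 1) / n) * indicator (?E j) \<omega>)"
    if "\<omega> \<in> space P" for \<omega>
  proof -
    have t0: "0 \<le> ?t \<omega>" unfolding Qv_def using npos by (intro mult_nonneg_nonneg) auto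
    have "(min 1 (Qv \<omega>))\<^sup>2 = (1 / n) * (?t \<omega>)\<^sup>2" using npos by (simp add: power_mult_distrib)
    moreover have "ennreal ((1 / n) * (?t \<omega>)\<^sup>2) = ennreal (1 / n) * ennreal ((?t \<omega>)\<^sup>2)"
      using npos by (intro ennreal_mult) auto
    ultimately have "ennreal ((min 1 (Qv \<omega>))\<^sup>2) = ennreal (1 / n) * ennreal ((?t \<omega>)\<^sup>2)"
      by simp
    also have "\<dots> \<le> ennreal (1 / n) * (\<Sum>j. if real j \<le> ?t \<omega> then ennreal (2 * real j + 1) else 0)"
      by (intro mult_left_mono layer t0) simp
    also have "\<dots> = (\<Sum>j. ennreal (1 / n) * (if real j \<le> ?t \<omega> then ennreal (2 * real j + 1) else 0))"
      by simp
    also have "\<dots> = (\<Sum>j. ennreal ((2 * real j + 1) / n) * indicator (?E j) \<omega>)"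
    proof (intro suminf_cong)
      fix j
      have em: "ennreal (1 / n) * ennreal (2 * real j + 1) = ennreal ((2 * real j + 1) / n)"
        using npos by (subst ennreal_mult[symmetric]) auto
      show "ennreal (1 / n) * (if real j \<le> ?t \<omega> then ennreal (2 * real j + 1) else 0) = ennreal ((2 * real j + 1) / n) * indicator (?E j) \<omega>"
        using that em by (cases "real j \<le> ?t \<omega>") (simp_all add: indicator_def del: ennreal_plus)
    qed
    finally show ?thesis .
  qed
  have "(\<integral>\<^sup>+\<omega>. ennreal ((min 1 (Qv \<omega>))\<^sup>2) \<partial>P) \<le> (\<integral>\<^sup>+\<omega>. (\<Sum>j. ennreal ((2 * real j + 1) / n) * indicator (?E j) \<omega>) \<partial>P)"
    by (intro nn_integral_mono pw)
  also have "\<dots> = (\<Sum>j. \<integral>\<^sup>+\<omega>. ennreal ((2 * real j + 1) / n) * indicator (?E j) \<omega> \<partial>P)"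
    by (rule nn_integral_suminf) measurable
  also have "\<dots> = (\<Sum>j. ennreal ((2 * real j + 1) / n) * emeasure P (?E j))"
    by (intro suminf_cong nn_integral_cmult_indicator Esets)
  also have "\<dots> \<le> (\<Sum>j. ennreal (Sgf lam j / n))"
  proof (intro suminf_le allI summableI)
    fix j
    have pj: "emeasure P (?E j) \<le> ennreal (2 * exp (- (real j)\<^sup>2 / (4 * lam\<^sup>2)))"
    proof (cases "j = 0")
      case True
      have "emeasure P (?E j) \<le> 1" by (rule emeasure_le_1)
      also have "1 \<le> ennreal (2 * exp (- (real j)\<^sup>2 / (4 * lam\<^sup>2)))" using True by simp
      finally show ?thesis .
    next
      case False
      show ?thesis
      proof (cases "real j \<le> sqrt n")
        case True thus ?thesis using tail_prob[OF n4, of j] False by simp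
      next
        case F2: False
        have "?E j = {}"
        proof safe
          fix \<omega> assume "\<omega> \<in> space P" "real j \<le> ?t \<omega>"
          moreover have "?t \<omega> \<le> 1 * sqrt n" using npos by (intro mult_right_mono) auto
          ultimately show "\<omega> \<in> {}" using F2 by simp
        qed
        thus ?thesis by (simp only: emeasure_empty) simp
      qed
    qed
    have "ennreal ((2 * real j + 1) / n) * emeasure P (?E j) \<le> ennreal ((2 * real j + 1) / n) * ennreal (2 * exp (- (real j)\<^sup>2 / (4 * lam\<^sup>2)))"
      by (intro mult_left_mono pj) simp
    also have "\<dots> = ennreal (Sgf lam j / n)"
      using npos by (simp add: Sgf_def ennreal_mult[symmetric] del: ennreal_mult)
    finally show "ennreal ((2 * real j + 1) / n) * emeasure P (?E j) \<le> ennreal (Sgf lam j / n)" .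
  qed
  also have "\<dots> = ennreal ((\<Sum>j. Sgf lam j) / n)"
  proof -
    have s: "summable (\<lambda>j. Sgf lam j / n)" using Sgf_summable[of lam] lam by (intro summable_divide) auto
    have "(\<Sum>j. ennreal (Sgf lam j / n)) = ennreal (\<Sum>j. Sgf lam j / n)"
      using s npos by (intro suminf_ennreal2) (auto intro!: divide_nonneg_pos Sgf_nn)
    also have "(\<Sum>j. Sgf lam j / n) = (\<Sum>j. Sgf lam j) / n"
      using Sgf_summable[of lam] lam by (intro suminf_divide) auto
    finally show ?thesis .
  qed
  finally have nn: "(\<integral>\<^sup>+\<omega>. ennreal ((min 1 (Qv \<omega>))\<^sup>2) \<partial>P) \<le> ennreal ((\<Sum>j. Sgf lam j) / n)" .
  show int: "integrable P (\<lambda>\<omega>. (min 1 (Qv \<omega>))\<^sup>2)"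
  proof (rule integrable_const_bound[where B=1])
    show "AE \<omega> in P. norm ((min 1 (Qv \<omega>))\<^sup>2) \<le> 1"
    proof (intro AE_I2)
      fix \<omega>
      have "0 \<le> min 1 (Qv \<omega>)" "min 1 (Qv \<omega>) \<le> 1" by (auto simp: Qv_def)
      hence "(min 1 (Qv \<omega>))\<^sup>2 \<le> 1" by (simp add: power_le_one)
      thus "norm ((min 1 (Qv \<omega>))\<^sup>2) \<le> 1" by simp
    qed
  qed simp
  have "ennreal (expectation (\<lambda>\<omega>. (min 1 (Qv \<omega>))\<^sup>2)) = (\<integral>\<^sup>+\<omega>. ennreal ((min 1 (Qv \<omega>))\<^sup>2) \<partial>P)"
    by (rule nn_integral_eq_integral[OF int, symmetric]) simp
  with nn have "ennreal (expectation (\<lambda>\<omega>. (min 1 (Qv \<omega>))\<^sup>2)) \<le> ennreal ((\<Sum>j. Sgf lam j) / n)" by simp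
  moreover have "0 \<le> (\<Sum>j. Sgf lam j) / n"
    using npos Sgf_summable[of lam] lam by (intro divide_nonneg_nonneg suminf_nonneg Sgf_nn) auto
  ultimately show "expectation (\<lambda>\<omega>. (min 1 (Qv \<omega>))\<^sup>2) \<le> (\<Sum>j. Sgf lam j) / n"
    by (simp add: ennreal_le_iff)
qed

end


definition "Lcf b = 2 * pi * real b * (2 * real b + 1)"
definition "n0f b lam = max 4 (lam * (2 * real b + 2))"
definition "Cf b lam \<sigma>2 = 8 * n0f b lam + 4 * lam * \<sigma>2 + 2 * (36 * lam ^ 3 * (Lcf b)\<^sup>2 + (4 + 2 * (Lcf b)\<^sup>2) * (\<Sum>j. Sgf lam j))"

context rs begin

lemma g_meas[measurable]: "g \<in> borel_measurable borel"
proof -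
  have "g = (\<lambda>x. Re (\<Sum>k=- int b..int b. fcoef g k * exp (\<i> * of_real (2 * pi * of_int k * x))))"
    by (rule ext) (metis gexp Re_complex_of_real)
  also have "\<dots> \<in> borel_measurable borel" by measurable
  finally show ?thesis .
qed

lemma measAhat[measurable]: "(\<lambda>\<omega>. Ahat g X Z k \<omega>) \<in> borel_measurable P"
proof -
  have "(\<lambda>\<omega>. (\<lambda>m \<omega>. (1 / of_nat m) * (\<Sum>i=1..m. complex_of_real (g (renS X i \<omega>) + Z i \<omega>)
                          * exp (- (\<i> * of_real (2 * pi * of_int k * of_nat i / of_nat m))))) (renM X \<omega>) \<omega>) \<in> borel_measurable P"
    by (rule measurable_compose_countable'[where I=UNIV]) auto
  thus ?thesis by (simp add: Ahat_def Let_def)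
qed

lemma measBv[measurable]: "(\<lambda>\<omega>. Bv k \<omega>) \<in> borel_measurable P"
proof -
  have "(\<lambda>\<omega>. (\<lambda>m \<omega>. (1 / of_nat m) * (\<Sum>i=1..m. complex_of_real (g (renS X i \<omega>))
                          * exp (- (\<i> * of_real (2 * pi * of_int k * of_nat i / of_nat m)))) - fcoef g k) (renM X \<omega>) \<omega>) \<in> borel_measurable P"
    by (rule measurable_compose_countable'[where I=UNIV]) auto
  thus ?thesis by (simp add: Bv_def)
qed

lemma measN[measurable]: "(\<lambda>\<omega>. Nm k (renM X \<omega>) \<omega>) \<in> borel_measurable P"
  by (rule measurable_compose_countable'[where I=UNIV]) auto

lemma split: "Ahat g X Z k \<omega> - fcoef g k = Bv k \<omega> + Nm k (renM X \<omega>) \<omega>"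
  by (simp add: Ahat_def Bv_def Nm_def Let_def distrib_left distrib_right sum.distrib)

lemma EB:
  assumes k: "k \<in> {- int b..int b}"
  shows "integrable P (\<lambda>\<omega>. (cmod (Bv k \<omega>))\<^sup>2)"
    and "expectation (\<lambda>\<omega>. (cmod (Bv k \<omega>))\<^sup>2) \<le> 4"
    and "n \<ge> n0 \<Longrightarrow> expectation (\<lambda>\<omega>. (cmod (Bv k \<omega>))\<^sup>2) \<le> (36 * lam ^ 3 * Lc\<^sup>2 + (4 + 2 * Lc\<^sup>2) * (\<Sum>j. Sgf lam j)) / n"
proof -
  have b4: "(cmod (Bv k \<omega>))\<^sup>2 \<le> 4" for \<omega>
    using power_mono[OF B_le2[of k \<omega>] norm_ge_zero, of 2] by simp
  show iB: "integrable P (\<lambda>\<omega>. (cmod (Bv k \<omega>))\<^sup>2)"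
    by (rule integrable_const_bound[where B=4]) (auto simp: b4)
  have "expectation (\<lambda>\<omega>. (cmod (Bv k \<omega>))\<^sup>2) \<le> expectation (\<lambda>\<omega>. 4)"
    by (intro integral_mono iB b4) auto
  thus "expectation (\<lambda>\<omega>. (cmod (Bv k \<omega>))\<^sup>2) \<le> 4" by (simp add: prob_space)
  assume nn0: "n \<ge> n0"
  have n4: "n \<ge> 4" using nn0 by (simp add: n0_def)
  let ?R = "\<lambda>\<omega>. (4 * lam * Lc\<^sup>2 / n) * (\<Sum>i\<in>{1..Kn}. (Dv i \<omega>)\<^sup>2) + (4 + 2 * Lc\<^sup>2) * (min 1 (Qv \<omega>))\<^sup>2"
  have iR: "integrable P ?R"
    by (intro Bochner_Integration.integrable_add Bochner_Integration.integrable_mult_right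
        Bochner_Integration.integrable_sum ED2(1) Emin(1)[OF n4])
  have "expectation (\<lambda>\<omega>. (cmod (Bv k \<omega>))\<^sup>2) \<le> expectation ?R"
  proof (intro integral_mono_AE iB iR)
    show "AE \<omega> in P. (cmod (Bv k \<omega>))\<^sup>2 \<le> ?R \<omega>"
      using AE_good by (rule eventually_mono) (rule B_det[OF _ nn0 k])
  qed
  also have "expectation ?R = (4 * lam * Lc\<^sup>2 / n) * (\<Sum>i\<in>{1..Kn}. expectation (\<lambda>\<omega>. (Dv i \<omega>)\<^sup>2))
       + (4 + 2 * Lc\<^sup>2) * expectation (\<lambda>\<omega>. (min 1 (Qv \<omega>))\<^sup>2)"
    by (simp add: Bochner_Integration.integral_add Bochner_Integration.integrable_sum ED2(1) Emin(1)[OF n4]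
        Bochner_Integration.integral_sum)
  also have "\<dots> \<le> (4 * lam * Lc\<^sup>2 / n) * (9 * lam\<^sup>2) + (4 + 2 * Lc\<^sup>2) * ((\<Sum>j. Sgf lam j) / n)"
  proof (intro add_mono mult_left_mono Emin(2)[OF n4])
    have "(\<Sum>i\<in>{1..Kn}. expectation (\<lambda>\<omega>. (Dv i \<omega>)\<^sup>2)) \<le> (\<Sum>i\<in>{1..Kn}. real Kn * (lam / n)\<^sup>2)"
    proof (intro sum_mono)
      fix i assume "i \<in> {1..Kn}"
      hence "real i * (lam / n)\<^sup>2 \<le> real Kn * (lam / n)\<^sup>2" by (intro mult_right_mono) auto
      thus "expectation (\<lambda>\<omega>. (Dv i \<omega>)\<^sup>2) \<le> real Kn * (lam / n)\<^sup>2" using ED2(2)[of i] by linarith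
    qed
    also have "\<dots> = (real Kn)\<^sup>2 * (lam / n)\<^sup>2" by (simp add: power2_eq_square)
    also have "\<dots> \<le> (3 * n)\<^sup>2 * (lam / n)\<^sup>2"
    proof -
      have "real Kn \<le> 2 * n + 1" unfolding Kn_def using natceil_le[of "2 * n"] npos by simp
      hence "real Kn \<le> 3 * n" using n4 by linarith
      thus ?thesis by (intro mult_right_mono power_mono) auto
    qed
    also have "\<dots> = 9 * lam\<^sup>2" using npos by (simp add: power2_eq_square field_simps)
    finally show "(\<Sum>i\<in>{1..Kn}. expectation (\<lambda>\<omega>. (Dv i \<omega>)\<^sup>2)) \<le> 9 * lam\<^sup>2" .
  qed (use lam npos in auto)
  also have "\<dots> = (36 * lam ^ 3 * Lc\<^sup>2 + (4 + 2 * Lc\<^sup>2) * (\<Sum>j. Sgf lam j)) / n"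
    using npos by (simp add: field_simps power2_eq_square power3_eq_cube)
  finally show "expectation (\<lambda>\<omega>. (cmod (Bv k \<omega>))\<^sup>2) \<le> (36 * lam ^ 3 * Lc\<^sup>2 + (4 + 2 * Lc\<^sup>2) * (\<Sum>j. Sgf lam j)) / n" .
qed

lemma EN:
  shows "integrable P (\<lambda>\<omega>. (cmod (Nm k (renM X \<omega>) \<omega>))\<^sup>2)"
    and "expectation (\<lambda>\<omega>. (cmod (Nm k (renM X \<omega>) \<omega>))\<^sup>2) \<le> 2 * lam * \<sigma>2 / n"
proof -
  have fin: "(\<integral>\<^sup>+\<omega>. ennreal ((cmod (Nm k (renM X \<omega>) \<omega>))\<^sup>2) \<partial>P) < \<infinity>"
    using N_bound[of k] by (simp add: le_less_trans)
  show iN: "integrable P (\<lambda>\<omega>. (cmod (Nm k (renM X \<omega>) \<omega>))\<^sup>2)"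
    by (rule integrableI_bounded) (use fin in auto)
  have "ennreal (expectation (\<lambda>\<omega>. (cmod (Nm k (renM X \<omega>) \<omega>))\<^sup>2)) = (\<integral>\<^sup>+\<omega>. ennreal ((cmod (Nm k (renM X \<omega>) \<omega>))\<^sup>2) \<partial>P)"
    by (rule nn_integral_eq_integral[OF iN, symmetric]) simp
  with N_bound[of k] have "ennreal (expectation (\<lambda>\<omega>. (cmod (Nm k (renM X \<omega>) \<omega>))\<^sup>2)) \<le> ennreal (2 * lam * \<sigma>2 / n)" by simp
  moreover have "0 \<le> 2 * lam * \<sigma>2 / n" using lam npos sig_nn by simp
  ultimately show "expectation (\<lambda>\<omega>. (cmod (Nm k (renM X \<omega>) \<omega>))\<^sup>2) \<le> 2 * lam * \<sigma>2 / n"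
    by (simp add: ennreal_le_iff)
qed

lemma EA:
  assumes k: "k \<in> {- int b..int b}"
  shows "integrable P (\<lambda>\<omega>. (cmod (Ahat g X Z k \<omega> - fcoef g k))\<^sup>2)"
    and "expectation (\<lambda>\<omega>. (cmod (Ahat g X Z k \<omega> - fcoef g k))\<^sup>2) \<le> Cf b lam \<sigma>2 / n"
proof -
  have pw: "(cmod (Ahat g X Z k \<omega> - fcoef g k))\<^sup>2 \<le> 2 * (cmod (Bv k \<omega>))\<^sup>2 + 2 * (cmod (Nm k (renM X \<omega>) \<omega>))\<^sup>2" for \<omega>
  proof -
    have "cmod (Ahat g X Z k \<omega> - fcoef g k) \<le> cmod (Bv k \<omega>) + cmod (Nm k (renM X \<omega>) \<omega>)"
      unfolding split by (rule norm_triangle_ineq)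
    hence "(cmod (Ahat g X Z k \<omega> - fcoef g k))\<^sup>2 \<le> (cmod (Bv k \<omega>) + cmod (Nm k (renM X \<omega>) \<omega>))\<^sup>2"
      by (intro power_mono) auto
    also have "\<dots> \<le> 2 * (cmod (Bv k \<omega>))\<^sup>2 + 2 * (cmod (Nm k (renM X \<omega>) \<omega>))\<^sup>2" by (rule sq_sum_le)
    finally show ?thesis .
  qed
  have iS: "integrable P (\<lambda>\<omega>. 2 * (cmod (Bv k \<omega>))\<^sup>2 + 2 * (cmod (Nm k (renM X \<omega>) \<omega>))\<^sup>2)"
    using EB(1)[OF k] EN(1)[of k] by simp
  show iA: "integrable P (\<lambda>\<omega>. (cmod (Ahat g X Z k \<omega> - fcoef g k))\<^sup>2)"
    by (rule Bochner_Integration.integrable_bound[OF iS]) (auto intro!: AE_I2 order_trans[OF _ pw])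
  have "expectation (\<lambda>\<omega>. (cmod (Ahat g X Z k \<omega> - fcoef g k))\<^sup>2)
      \<le> expectation (\<lambda>\<omega>. 2 * (cmod (Bv k \<omega>))\<^sup>2 + 2 * (cmod (Nm k (renM X \<omega>) \<omega>))\<^sup>2)"
    by (intro integral_mono iA iS pw)
  also have "\<dots> = 2 * expectation (\<lambda>\<omega>. (cmod (Bv k \<omega>))\<^sup>2) + 2 * expectation (\<lambda>\<omega>. (cmod (Nm k (renM X \<omega>) \<omega>))\<^sup>2)"
    using EB(1)[OF k] EN(1)[of k] by simp
  also have "\<dots> \<le> Cf b lam \<sigma>2 / n"
  proof -
    have N: "2 * expectation (\<lambda>\<omega>. (cmod (Nm k (renM X \<omega>) \<omega>))\<^sup>2) \<le> 4 * lam * \<sigma>2 / n"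
      using EN(2)[of k] by simp
    have Sg0: "0 \<le> (\<Sum>j. Sgf lam j)" using Sgf_summable[of lam] lam by (intro suminf_nonneg Sgf_nn) auto
    have LcE: "Lc = Lcf b" and n0E: "n0 = n0f b lam" by (simp_all add: Lc_def Lcf_def n0_def n0f_def)
    have T0: "0 \<le> 36 * lam ^ 3 * (Lcf b)\<^sup>2 + (4 + 2 * (Lcf b)\<^sup>2) * (\<Sum>j. Sgf lam j)"
      using lam Sg0 by (intro add_nonneg_nonneg mult_nonneg_nonneg) auto
    show ?thesis
    proof (cases "n \<ge> n0")
      case True
      have "2 * expectation (\<lambda>\<omega>. (cmod (Bv k \<omega>))\<^sup>2) \<le> 2 * ((36 * lam ^ 3 * Lc\<^sup>2 + (4 + 2 * Lc\<^sup>2) * (\<Sum>j. Sgf lam j)) / n)"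
        using EB(3)[OF k True] by linarith
      moreover have "2 * ((36 * lam ^ 3 * Lc\<^sup>2 + (4 + 2 * Lc\<^sup>2) * (\<Sum>j. Sgf lam j)) / n) + 4 * lam * \<sigma>2 / n \<le> Cf b lam \<sigma>2 / n"
      proof -
        have "0 \<le> 8 * n0f b lam" by (simp add: n0f_def)
        hence "2 * (36 * lam ^ 3 * Lc\<^sup>2 + (4 + 2 * Lc\<^sup>2) * (\<Sum>j. Sgf lam j)) + 4 * lam * \<sigma>2 \<le> Cf b lam \<sigma>2"
          unfolding Cf_def LcE by linarith
        thus ?thesis using npos by (simp add: divide_right_mono add_divide_distrib[symmetric])
      qed
      ultimately show ?thesis using N by linarith
    next
      case False
      have "2 * expectation (\<lambda>\<omega>. (cmod (Bv k \<omega>))\<^sup>2) \<le> 8" using EB(2)[OF k] by simp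
      also have "8 \<le> 8 * n0 / n" using False npos by (simp add: field_simps)
      finally have B: "2 * expectation (\<lambda>\<omega>. (cmod (Bv k \<omega>))\<^sup>2) \<le> 8 * n0 / n" .
      have T0': "0 \<le> 2 * (36 * lam ^ 3 * (Lcf b)\<^sup>2 + (4 + 2 * (Lcf b)\<^sup>2) * suminf (Sgf lam))" using T0 by simp
      have "8 * n0 + 4 * lam * \<sigma>2 \<le> Cf b lam \<sigma>2" unfolding Cf_def n0E using T0' by linarith
      hence "(8 * n0 + 4 * lam * \<sigma>2) / n \<le> Cf b lam \<sigma>2 / n" using npos by (simp add: divide_right_mono)
      thus ?thesis using B N by (simp add: add_divide_distrib)
    qed
  qed
  finally show "expectation (\<lambda>\<omega>. (cmod (Ahat g X Z k \<omega> - fcoef g k))\<^sup>2) \<le> Cf b lam \<sigma>2 / n" .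
qed

lemma parseval_omega:
  "(LBINT x:{0..1}. (cmod (Ghat b g X Z x \<omega> - complex_of_real (g x)))\<^sup>2)
     = (\<Sum>k=- int b..int b. (cmod (Ahat g X Z k \<omega> - fcoef g k))\<^sup>2)"
proof -
  have "Ghat b g X Z x \<omega> - complex_of_real (g x)
     = (\<Sum>k=- int b..int b. (Ahat g X Z k \<omega> - fcoef g k) * exp (\<i> * of_real (2 * pi * of_int k * x)))" for x
    unfolding Ghat_def gexp[of x] by (simp add: sum_subtractf[symmetric] left_diff_distrib)
  thus ?thesis by (simp only: parseval)
qed

end

theorem theorem1:
  fixes b :: nat and lam \<sigma>2 :: real
  assumes "b \<ge> 1" and "lam > 1" and "\<sigma>2 \<ge> 0"
  shows "\<exists>C::real. \<forall>(P::'a measure) (g::real \<Rightarrow> real) (n::real) (X::nat \<Rightarrow> 'a \<Rightarrow> real) (Z::nat \<Rightarrow> 'a \<Rightarrow> real).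
     prob_space P \<and> n > 0
     \<and> (\<forall>x. g (x + 1) = g x) \<and> (\<forall>x. \<bar>g x\<bar> \<le> 1)
     \<and> (\<forall>x. complex_of_real (g x) = (\<Sum>k=- int b..int b. fcoef g k * exp (\<i> * of_real (2 * pi * of_int k * x))))
     \<and> prob_space.indep_vars P (\<lambda>_. borel) (\<lambda>i. case i of Inl m \<Rightarrow> X m | Inr m \<Rightarrow> Z m) UNIV
     \<and> (\<forall>m. distr P borel (X m) = distr P borel (X 0))
     \<and> (\<forall>m. distr P borel (Z m) = distr P borel (Z 0))
     \<and> (AE \<omega> in P. 0 < X 0 \<omega> \<and> X 0 \<omega> \<le> lam / n)
     \<and> integral\<^sup>L P (X 0) = 1 / n
     \<and> integrable P (\<lambda>\<omega>. (Z 0 \<omega>)\<^sup>2)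
     \<and> integral\<^sup>L P (Z 0) = 0
     \<and> integral\<^sup>L P (\<lambda>\<omega>. (Z 0 \<omega>)\<^sup>2) = \<sigma>2
     \<longrightarrow> (\<forall>k\<in>{- int b..int b}.
             integral\<^sup>L P (\<lambda>\<omega>. (cmod (Ahat g X Z k \<omega> - fcoef g k))\<^sup>2) \<le> C / n)
       \<and> integral\<^sup>L P (\<lambda>\<omega>. LBINT x:{0..1}. (cmod (Ghat b g X Z x \<omega> - complex_of_real (g x)))\<^sup>2)
           = (\<Sum>k=- int b..int b. integral\<^sup>L P (\<lambda>\<omega>. (cmod (Ahat g X Z k \<omega> - fcoef g k))\<^sup>2))
       \<and> integral\<^sup>L P (\<lambda>\<omega>. LBINT x:{0..1}. (cmod (Ghat b g X Z x \<omega> - complex_of_real (g x)))\<^sup>2)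
           \<le> (2 * real b + 1) * C / n"
proof (intro exI[of _ "Cf b lam \<sigma>2"] allI impI)
  fix P :: "'a measure" and g :: "real \<Rightarrow> real" and n :: real and X Z :: "nat \<Rightarrow> 'a \<Rightarrow> real"
  assume H: "prob_space P \<and> n > 0
     \<and> (\<forall>x. g (x + 1) = g x) \<and> (\<forall>x. \<bar>g x\<bar> \<le> 1)
     \<and> (\<forall>x. complex_of_real (g x) = (\<Sum>k=- int b..int b. fcoef g k * exp (\<i> * of_real (2 * pi * of_int k * x))))
     \<and> prob_space.indep_vars P (\<lambda>_. borel) (\<lambda>i. case i of Inl m \<Rightarrow> X m | Inr m \<Rightarrow> Z m) UNIV
     \<and> (\<forall>m. distr P borel (X m) = distr P borel (X 0))
     \<and> (\<forall>m. distr P borel (Z m) = distr P borel (Z 0))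
     \<and> (AE \<omega> in P. 0 < X 0 \<omega> \<and> X 0 \<omega> \<le> lam / n)
     \<and> integral\<^sup>L P (X 0) = 1 / n
     \<and> integrable P (\<lambda>\<omega>. (Z 0 \<omega>)\<^sup>2)
     \<and> integral\<^sup>L P (Z 0) = 0
     \<and> integral\<^sup>L P (\<lambda>\<omega>. (Z 0 \<omega>)\<^sup>2) = \<sigma>2"
  from H have hP: "prob_space P" by blast
  from H have hn: "n > 0" by blast
  from H have hg: "\<forall>x. \<bar>g x\<bar> \<le> 1" by blast
  from H have he: "\<forall>x. complex_of_real (g x) = (\<Sum>k=- int b..int b. fcoef g k * exp (\<i> * of_real (2 * pi * of_int k * x)))" by blast
  from H have hi: "prob_space.indep_vars P (\<lambda>_. borel) (\<lambda>i. case i of Inl m \<Rightarrow> X m | Inr m \<Rightarrow> Z m) UNIV" by blast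
  from H have hdx: "\<forall>m. distr P borel (X m) = distr P borel (X 0)" by blast
  from H have hdz: "\<forall>m. distr P borel (Z m) = distr P borel (Z 0)" by blast
  from H have hae: "AE \<omega> in P. 0 < X 0 \<omega> \<and> X 0 \<omega> \<le> lam / n" by blast
  from H have hex: "integral\<^sup>L P (X 0) = 1 / n" by blast
  from H have hiz: "integrable P (\<lambda>\<omega>. (Z 0 \<omega>)\<^sup>2)" by blast
  from H have hez: "integral\<^sup>L P (Z 0) = 0" by blast
  from H have hez2: "integral\<^sup>L P (\<lambda>\<omega>. (Z 0 \<omega>)\<^sup>2) = \<sigma>2" by blast
  interpret rs P b lam \<sigma>2 n g X Z
  proof (rule rs.intro[OF hP], rule rs_axioms.intro)
    show "lam > 1" "n > 0" "b \<ge> 1" using assms hn by auto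
    show "\<And>x. \<bar>g x\<bar> \<le> 1" using hg by blast
    show "\<And>x. complex_of_real (g x) = (\<Sum>k=- int b..int b. fcoef g k * exp (\<i> * of_real (2 * pi * of_int k * x)))" using he by blast
    show "prob_space.indep_vars P (\<lambda>_. borel) (\<lambda>i. case i of Inl m \<Rightarrow> X m | Inr m \<Rightarrow> Z m) UNIV" by (rule hi)
    show "\<And>m. distr P borel (X m) = distr P borel (X 0)" using hdx by blast
    show "\<And>m. distr P borel (Z m) = distr P borel (Z 0)" using hdz by blast
  qed (rule hae hex hiz hez hez2)+
  let ?E = "\<lambda>k. integral\<^sup>L P (\<lambda>\<omega>. (cmod (Ahat g X Z k \<omega> - fcoef g k))\<^sup>2)"
  have 1: "\<forall>k\<in>{- int b..int b}. ?E k \<le> Cf b lam \<sigma>2 / n"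
    using EA(2) by blast
  have 2: "integral\<^sup>L P (\<lambda>\<omega>. LBINT x:{0..1}. (cmod (Ghat b g X Z x \<omega> - complex_of_real (g x)))\<^sup>2)
           = (\<Sum>k=- int b..int b. ?E k)"
  proof -
    have "integral\<^sup>L P (\<lambda>\<omega>. LBINT x:{0..1}. (cmod (Ghat b g X Z x \<omega> - complex_of_real (g x)))\<^sup>2)
        = integral\<^sup>L P (\<lambda>\<omega>. \<Sum>k=- int b..int b. (cmod (Ahat g X Z k \<omega> - fcoef g k))\<^sup>2)"
      by (simp only: parseval_omega)
    also have "\<dots> = (\<Sum>k=- int b..int b. ?E k)"
      by (rule Bochner_Integration.integral_sum) (rule EA(1), simp)
    finally show ?thesis .
  qed
  have 3: "(\<Sum>k=- int b..int b. ?E k) \<le> (2 * real b + 1) * Cf b lam \<sigma>2 / n"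
  proof -
    have "(\<Sum>k=- int b..int b. ?E k) \<le> (\<Sum>k=- int b..int b. Cf b lam \<sigma>2 / n)"
      by (intro sum_mono) (use 1 in blast)
    also have "\<dots> = (2 * real b + 1) * Cf b lam \<sigma>2 / n" by simp
    finally show ?thesis .
  qed
  show "(\<forall>k\<in>{- int b..int b}. ?E k \<le> Cf b lam \<sigma>2 / n)
       \<and> integral\<^sup>L P (\<lambda>\<omega>. LBINT x:{0..1}. (cmod (Ghat b g X Z x \<omega> - complex_of_real (g x)))\<^sup>2)
           = (\<Sum>k=- int b..int b. ?E k)
       \<and> integral\<^sup>L P (\<lambda>\<omega>. LBINT x:{0..1}. (cmod (Ghat b g X Z x \<omega> - complex_of_real (g x)))\<^sup>2)
           \<le> (2 * real b + 1) * Cf b lam \<sigma>2 / n"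
    using 1 2 3 by (intro conjI) (simp_all only:)
qed

end
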